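(* Let $(A,\mathfrak{m}_A)$ be a local homologically bounded DG algebra with $A\not\simeq 0$ and $\mathfrak{m}_A=A_+$, and let $K$ be a homologically finite DG $A$-module. Let $F\xrightarrow{\simeq} K$ be a minimal semifree resolution with semibasis $E$, fix an integer $r\geq \sup(H(K))$, let $\widetilde{K}=\tau_{\leq r}(F)$ be the soft truncation, let $L=F^{(r)}$ be the semifree DG $A$-submodule of $F$ spanned by the semibasis elements of degree $\leq r$, let $\pi\colon L\to \widetilde{K}$ be the composition of the inclusion $L\to F$ with the natural map $F\to\widetilde{K}$, and let $\operatorname{Syz}_r(K)=\ker(\pi)$ with inclusion $\alpha\colon\operatorname{Syz}_r(K)\to L$. Then there is a short exact sequence of morphisms of DG $A$-modules $$0\to\operatorname{Syz}_r(K)\xrightarrow{\alpha} L\xrightarrow{\pi}\widetilde{K}\to 0$$ such that $L$ is semifree with a finite semibasis, $\widetilde{K}\simeq K$, and $\operatorname{Im}(\alpha)\subseteq A_+L$.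
   Context: Complexes are indexed homologically. A DG algebra is a complex $A$ with a unital, associative, graded-commutative chain map multiplication; positively graded means $A_i=0$ for $i<0$. A positively graded DG algebra $A$ is local if $H_0(A)$ is a noetherian local ring and each $H_i(A)$ is a finitely generated $H_0(A)$-module; $\mathfrak{m}_A$ denotes its maximal ideal, here assumed equal to $A_+=\bigoplus_{i\geq1}A_i$ (so $A_0$ is a field). Homologically bounded means $\operatorname{amp}(H(A))<\infty$, where $\operatorname{amp}=\sup-\inf$ of degrees of nonzero components; $A\not\simeq 0$ means $H(A)\neq 0$. A DG $A$-module $K$ is homologically finite if $H(K)$ is finitely generated over $H_0(A)$. A DG $A$-module $X$ with $\inf(X)>-\infty$ is semifree if its underlying graded module is free over $A^\natural$; a semibasis is a homogeneous basis. A minimal semifree resolution of $K$ is a quasiisomorphism $F\to K$ with $F$ semifree, semibasis finite in each degree, and $\partial^F(F)\subseteq \mathfrak{m}_AF$ (these exist for homologically finite $K$). The soft truncation $\tau_{\leq r}(F)$ is the complex $\cdots\to 0\to F_r/\operatorname{Im}\partial_{r+1}\to F_{r-1}\to\cdots$, a DG $A$-module quotient of $F$. *)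

theory Defs
  imports "HOL-Algebra.Ideal" "HOL-Algebra.QuotRing" "HOL-Algebra.Ring_Divisibility"
begin

section \<open>DG algebras (homological grading), as graded pieces of a ring\<close>

record 'a dg_alg =
  agr :: "int \<Rightarrow> 'a set"
  adf :: "'a \<Rightarrow> 'a"

definition sgn_int :: "int \<Rightarrow> 'a::ring_1" where
  "sgn_int i = (if even i then 1 else - 1)"

definition dg_algebra :: "('a::ring_1) dg_alg \<Rightarrow> bool" where
  "dg_algebra A \<longleftrightarrow>
     (\<forall>i. 0 \<in> agr A i \<and> (\<forall>x\<in>agr A i. \<forall>y\<in>agr A i. x + y \<in> agr A i \<and> - x \<in> agr A i)) \<and>
     (\<forall>S a. finite S \<longrightarrow> (\<forall>i\<in>S. a i \<in> agr A i) \<longrightarrow> (\<Sum>i\<in>S. a i) = 0 \<longrightarrow> (\<forall>i\<in>S. a i = 0)) \<and>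
     1 \<in> agr A 0 \<and>
     (\<forall>i j. \<forall>x\<in>agr A i. \<forall>y\<in>agr A j. x * y \<in> agr A (i + j) \<and> x * y = sgn_int (i * j) * (y * x)) \<and>
     (\<forall>i. \<forall>x\<in>agr A i. adf A x \<in> agr A (i - 1) \<and> adf A (adf A x) = 0) \<and>
     (\<forall>i. \<forall>x\<in>agr A i. \<forall>y\<in>agr A i. adf A (x + y) = adf A x + adf A y) \<and>
     (\<forall>i j. \<forall>x\<in>agr A i. \<forall>y\<in>agr A j. adf A (x * y) = adf A x * y + sgn_int i * (x * adf A y))"

definition positively_graded :: "('a::ring_1) dg_alg \<Rightarrow> bool" where
  "positively_graded A \<longleftrightarrow> (\<forall>i<0. agr A i = {0})"

section \<open>DG modules, given degreewise (a complex is a family of abelian groups)\<close>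

record ('a, 'm) dg_mod =
  mgr :: "int \<Rightarrow> 'm set"
  mzr :: "int \<Rightarrow> 'm"
  mad :: "int \<Rightarrow> 'm \<Rightarrow> 'm \<Rightarrow> 'm"
  msm :: "int \<Rightarrow> int \<Rightarrow> 'a \<Rightarrow> 'm \<Rightarrow> 'm"     \<comment> \<open>msm j i: A_j x M_i -> M_(i+j)\<close>
  mdf :: "int \<Rightarrow> 'm \<Rightarrow> 'm"

definition dg_module :: "('a::ring_1) dg_alg \<Rightarrow> ('a, 'm) dg_mod \<Rightarrow> bool" where
  "dg_module A M \<longleftrightarrow>
     (\<forall>i. mzr M i \<in> mgr M i \<and>
          (\<forall>x\<in>mgr M i. \<forall>y\<in>mgr M i. mad M i x y \<in> mgr M i \<and> mad M i x y = mad M i y x) \<and>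
          (\<forall>x\<in>mgr M i. \<forall>y\<in>mgr M i. \<forall>z\<in>mgr M i. mad M i (mad M i x y) z = mad M i x (mad M i y z)) \<and>
          (\<forall>x\<in>mgr M i. mad M i (mzr M i) x = x) \<and>
          (\<forall>x\<in>mgr M i. \<exists>y\<in>mgr M i. mad M i x y = mzr M i)) \<and>
     (\<forall>i j. \<forall>a\<in>agr A j. \<forall>x\<in>mgr M i. msm M j i a x \<in> mgr M (i + j)) \<and>
     (\<forall>i j. \<forall>a\<in>agr A j. \<forall>b\<in>agr A j. \<forall>x\<in>mgr M i.
          msm M j i (a + b) x = mad M (i + j) (msm M j i a x) (msm M j i b x)) \<and>
     (\<forall>i j. \<forall>a\<in>agr A j. \<forall>x\<in>mgr M i. \<forall>y\<in>mgr M i.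
          msm M j i a (mad M i x y) = mad M (i + j) (msm M j i a x) (msm M j i a y)) \<and>
     (\<forall>i. \<forall>x\<in>mgr M i. msm M 0 i 1 x = x) \<and>
     (\<forall>i j k. \<forall>a\<in>agr A j. \<forall>b\<in>agr A k. \<forall>x\<in>mgr M i.
          msm M k (i + j) b (msm M j i a x) = msm M (j + k) i (b * a) x) \<and>
     (\<forall>i. \<forall>x\<in>mgr M i. mdf M i x \<in> mgr M (i - 1) \<and> mdf M (i - 1) (mdf M i x) = mzr M (i - 2)) \<and>
     (\<forall>i. \<forall>x\<in>mgr M i. \<forall>y\<in>mgr M i. mdf M i (mad M i x y) = mad M (i - 1) (mdf M i x) (mdf M i y)) \<and>
     (\<forall>i j. \<forall>a\<in>agr A j. \<forall>x\<in>mgr M i.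
          mdf M (i + j) (msm M j i a x) =
          mad M (i + j - 1) (msm M (j - 1) i (adf A a) x) (msm M j (i - 1) (sgn_int j * a) (mdf M i x)))"

definition dg_hom :: "('a::ring_1) dg_alg \<Rightarrow> ('a, 'm) dg_mod \<Rightarrow> ('a, 'n) dg_mod
                      \<Rightarrow> (int \<Rightarrow> 'm \<Rightarrow> 'n) \<Rightarrow> bool" where
  "dg_hom A M N f \<longleftrightarrow>
     (\<forall>i. \<forall>x\<in>mgr M i. f i x \<in> mgr N i) \<and>
     (\<forall>i. \<forall>x\<in>mgr M i. \<forall>y\<in>mgr M i. f i (mad M i x y) = mad N i (f i x) (f i y)) \<and>
     (\<forall>i. \<forall>x\<in>mgr M i. f (i - 1) (mdf M i x) = mdf N i (f i x)) \<and>
     (\<forall>i j. \<forall>a\<in>agr A j. \<forall>x\<in>mgr M i. f (i + j) (msm M j i a x) = msm N j i a (f i x))"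

definition cycles :: "('a, 'm) dg_mod \<Rightarrow> int \<Rightarrow> 'm set" where
  "cycles M i = {x \<in> mgr M i. mdf M i x = mzr M (i - 1)}"

definition bnds :: "('a, 'm) dg_mod \<Rightarrow> int \<Rightarrow> 'm set" where
  "bnds M i = mdf M (i + 1) ` mgr M (i + 1)"

definition homology_vanishes :: "('a, 'm) dg_mod \<Rightarrow> int \<Rightarrow> bool" where
  "homology_vanishes M i \<longleftrightarrow> cycles M i \<subseteq> bnds M i"

definition quasi_iso :: "('a::ring_1) dg_alg \<Rightarrow> ('a, 'm) dg_mod \<Rightarrow> ('a, 'n) dg_mod
                         \<Rightarrow> (int \<Rightarrow> 'm \<Rightarrow> 'n) \<Rightarrow> bool" where
  "quasi_iso A M N f \<longleftrightarrow> dg_hom A M N f \<and>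
     (\<forall>i. (\<forall>z\<in>cycles M i. f i z \<in> bnds N i \<longrightarrow> z \<in> bnds M i) \<and>
          (\<forall>w\<in>cycles N i. \<exists>z\<in>cycles M i. \<exists>b\<in>mgr N (i + 1). w = mad N i (f i z) (mdf N (i + 1) b)))"

definition msum :: "('a, 'm) dg_mod \<Rightarrow> int \<Rightarrow> ('b \<Rightarrow> 'm) \<Rightarrow> 'b set \<Rightarrow> 'm" where
  "msum M i g S = finprod \<lparr>carrier = mgr M i, mult = mad M i, one = mzr M i\<rparr> g S"

definition alg_mod :: "('a::ring_1) dg_alg \<Rightarrow> ('a, 'a) dg_mod" where
  "alg_mod A = \<lparr>mgr = agr A, mzr = (\<lambda>_. 0), mad = (\<lambda>_. (+)), msm = (\<lambda>_ _. (*)), mdf = (\<lambda>_. adf A)\<rparr>"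

definition A0ring :: "('a::ring_1) dg_alg \<Rightarrow> 'a ring" where
  "A0ring A = \<lparr>carrier = agr A 0, monoid.mult = (*), one = 1, zero = 0, add = (+)\<rparr>"

definition H0ring :: "('a::ring_1) dg_alg \<Rightarrow> 'a set ring" where
  "H0ring A = A0ring A Quot (adf A ` agr A 1)"

definition local_ring :: "('b, 'c) ring_scheme \<Rightarrow> bool" where
  "local_ring R \<longleftrightarrow> cring R \<and> (\<exists>!I. maximalideal I R)"

text \<open>H(M) is finitely generated over H_0(A) (by finitely many homogeneous classes;
  H_0(A) acts through representatives in A_0).\<close>
definition homologically_finite :: "('a::ring_1) dg_alg \<Rightarrow> ('a, 'm) dg_mod \<Rightarrow> bool" where
  "homologically_finite A M \<longleftrightarrow>
     (\<exists>G. finite G \<and> (\<forall>(i, g)\<in>G. g \<in> cycles M i) \<and>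
        (\<forall>i. \<forall>z\<in>cycles M i. \<exists>c b. (\<forall>g. c g \<in> agr A 0) \<and> b \<in> mgr M (i + 1) \<and>
             z = mad M i (msum M i (\<lambda>g. msm M 0 i (c g) g) {g. (i, g) \<in> G}) (mdf M (i + 1) b)))"

definition homology_fg :: "('a::ring_1) dg_alg \<Rightarrow> ('a, 'm) dg_mod \<Rightarrow> int \<Rightarrow> bool" where
  "homology_fg A M i \<longleftrightarrow>
     (\<exists>G. finite G \<and> G \<subseteq> cycles M i \<and>
        (\<forall>z\<in>cycles M i. \<exists>c b. (\<forall>g. c g \<in> agr A 0) \<and> b \<in> mgr M (i + 1) \<and>
             z = mad M i (msum M i (\<lambda>g. msm M 0 i (c g) g) G) (mdf M (i + 1) b)))"

definition local_dg_algebra :: "('a::ring_1) dg_alg \<Rightarrow> bool" where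
  "local_dg_algebra A \<longleftrightarrow> dg_algebra A \<and> positively_graded A \<and>
     local_ring (H0ring A) \<and> noetherian_ring (H0ring A) \<and> (\<forall>i. homology_fg A (alg_mod A) i)"

text \<open>m_A = A_+ : the maximal ideal of A is (preimage in A_0 of the maximal ideal of H_0(A)) + A_+;
  it equals A_+ iff that preimage is zero.\<close>
definition max_ideal_is_Aplus :: "('a::ring_1) dg_alg \<Rightarrow> bool" where
  "max_ideal_is_Aplus A \<longleftrightarrow>
     (\<forall>I. maximalideal I (H0ring A) \<longrightarrow>
        {a \<in> agr A 0. a_r_coset (A0ring A) (adf A ` agr A 1) a \<in> I} = {0})"

definition homologically_bounded :: "('a::ring_1) dg_alg \<Rightarrow> bool" where
  "homologically_bounded A \<longleftrightarrow> (\<exists>m n. \<forall>i. (i < m \<or> n < i) \<longrightarrow> homology_vanishes (alg_mod A) i)"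

definition dga_nonzero :: "('a::ring_1) dg_alg \<Rightarrow> bool" where
  "dga_nonzero A \<longleftrightarrow> (\<exists>i. \<not> homology_vanishes (alg_mod A) i)"

section \<open>Semifree modules, minimal resolutions\<close>

text \<open>Admissible coefficient families for a linear combination in degree n of a homogeneous
  family E (E j = elements of degree j): coefficient of e in E j lies in A_(n-j), finite support.\<close>
definition coeff_ok :: "('a::ring_1) dg_alg \<Rightarrow> (int \<Rightarrow> 'm set) \<Rightarrow> int \<Rightarrow> (int \<Rightarrow> 'm \<Rightarrow> 'a) \<Rightarrow> bool" where
  "coeff_ok A E n c \<longleftrightarrow>
     (\<forall>j e. c j e \<in> (if e \<in> E j then agr A (n - j) else {0})) \<and> finite {(j, e). c j e \<noteq> 0}"

definition lincomb :: "('a::zero, 'm) dg_mod \<Rightarrow> int \<Rightarrow> (int \<Rightarrow> 'm \<Rightarrow> 'a) \<Rightarrow> 'm" where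
  "lincomb M n c = msum M n (\<lambda>(j, e). msm M (n - j) j (c j e) e) {(j, e). c j e \<noteq> 0}"

definition span_set :: "('a::ring_1) dg_alg \<Rightarrow> ('a, 'm) dg_mod \<Rightarrow> (int \<Rightarrow> 'm set) \<Rightarrow> int \<Rightarrow> 'm set" where
  "span_set A M E n = {lincomb M n c | c. coeff_ok A E n c}"

definition semibasis :: "('a::ring_1) dg_alg \<Rightarrow> ('a, 'm) dg_mod \<Rightarrow> (int \<Rightarrow> 'm set) \<Rightarrow> bool" where
  "semibasis A M E \<longleftrightarrow> (\<forall>j. E j \<subseteq> mgr M j) \<and>
     (\<forall>n. \<forall>x\<in>mgr M n. \<exists>!c. coeff_ok A E n c \<and> x = lincomb M n c)"

definition semifree :: "('a::ring_1) dg_alg \<Rightarrow> ('a, 'm) dg_mod \<Rightarrow> (int \<Rightarrow> 'm set) \<Rightarrow> bool" where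
  "semifree A M E \<longleftrightarrow> dg_module A M \<and> (\<exists>b. \<forall>i<b. mgr M i = {mzr M i}) \<and> semibasis A M E"

text \<open>(A_+ S)_n: finite sums of a*s with a in A_j, j >= 1, s in S_(n-j).\<close>
inductive_set aplus_span :: "('a::ring_1) dg_alg \<Rightarrow> ('a, 'm) dg_mod \<Rightarrow> (int \<Rightarrow> 'm set) \<Rightarrow> int \<Rightarrow> 'm set"
  for A M S n where
  zero: "mzr M n \<in> aplus_span A M S n"
| step: "\<lbrakk>x \<in> aplus_span A M S n; 1 \<le> j; a \<in> agr A j; s \<in> S (n - j)\<rbrakk>
          \<Longrightarrow> mad M n x (msm M j (n - j) a s) \<in> aplus_span A M S n"

definition minimal_semifree_resolution ::
  "('a::ring_1) dg_alg \<Rightarrow> ('a, 'f) dg_mod \<Rightarrow> (int \<Rightarrow> 'f set) \<Rightarrow> ('a, 'k) dg_mod \<Rightarrow> (int \<Rightarrow> 'f \<Rightarrow> 'k) \<Rightarrow> bool" where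
  "minimal_semifree_resolution A F E K eps \<longleftrightarrow>
     semifree A F E \<and> (\<forall>j. finite (E j)) \<and> quasi_iso A F K eps \<and>
     (\<forall>n. \<forall>x\<in>mgr F n. mdf F n x \<in> aplus_span A F (mgr F) (n - 1))"

definition trunc_basis :: "(int \<Rightarrow> 'f set) \<Rightarrow> int \<Rightarrow> int \<Rightarrow> 'f set" where
  "trunc_basis E r j = (if j \<le> r then E j else {})"

definition Fr :: "('a::ring_1) dg_alg \<Rightarrow> ('a, 'f) dg_mod \<Rightarrow> (int \<Rightarrow> 'f set) \<Rightarrow> int \<Rightarrow> ('a, 'f) dg_mod" where
  "Fr A F E r = F\<lparr>mgr := span_set A F (trunc_basis E r)\<rparr>"

text \<open>The subcomplex U of F with F/U = soft truncation: 0 below r, Im d_(r+1) in degree r, F above.\<close>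
definition trunc_sub :: "('a, 'f) dg_mod \<Rightarrow> int \<Rightarrow> int \<Rightarrow> 'f set" where
  "trunc_sub F r i = (if i < r then {mzr F i} else if i = r then bnds F r else mgr F i)"

definition coset_of :: "('a, 'f) dg_mod \<Rightarrow> int \<Rightarrow> int \<Rightarrow> 'f \<Rightarrow> 'f set" where
  "coset_of F r i x = {mad F i x u | u. u \<in> trunc_sub F r i}"

text \<open>Soft truncation tau_(<= r)(F) = F/U, elements are cosets.\<close>
definition soft_trunc :: "('a, 'f) dg_mod \<Rightarrow> int \<Rightarrow> ('a, 'f set) dg_mod" where
  "soft_trunc F r =
     \<lparr>mgr = (\<lambda>i. coset_of F r i ` mgr F i),
      mzr = (\<lambda>i. trunc_sub F r i),
      mad = (\<lambda>i X Y. {mad F i x y | x y. x \<in> X \<and> y \<in> Y}),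
      msm = (\<lambda>j i a X. {mad F (i + j) (msm F j i a x) u | x u. x \<in> X \<and> u \<in> trunc_sub F r (i + j)}),
      mdf = (\<lambda>i X. {mad F (i - 1) (mdf F i x) u | x u. x \<in> X \<and> u \<in> trunc_sub F r (i - 1)})\<rparr>"

definition trunc_proj :: "('a, 'f) dg_mod \<Rightarrow> int \<Rightarrow> int \<Rightarrow> 'f \<Rightarrow> 'f set" where
  "trunc_proj F r = coset_of F r"

definition syz :: "('a::ring_1) dg_alg \<Rightarrow> ('a, 'f) dg_mod \<Rightarrow> (int \<Rightarrow> 'f set) \<Rightarrow> int \<Rightarrow> ('a, 'f) dg_mod" where
  "syz A F E r = F\<lparr>mgr := (\<lambda>i. {x \<in> mgr (Fr A F E r) i. trunc_proj F r i x = mzr (soft_trunc F r) i})\<rparr>"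

text \<open>M and N are quasi-isomorphic (isomorphic in the derived category), witnessed by a roof
  M <- X -> N of quasi-isomorphisms with X a DG module on the carrier type 'x.\<close>
definition quasi_isomorphic_via ::
  "'x itself \<Rightarrow> ('a::ring_1) dg_alg \<Rightarrow> ('a, 'm) dg_mod \<Rightarrow> ('a, 'n) dg_mod \<Rightarrow> bool" where
  "quasi_isomorphic_via T A M N \<longleftrightarrow>
     (\<exists>(X :: ('a, 'x) dg_mod) f g. dg_module A X \<and> quasi_iso A X M f \<and> quasi_iso A X N g)"

end

theory Submission
  imports Defs
begin


definition grp :: "('a,'m) dg_mod \<Rightarrow> int \<Rightarrow> 'm monoid" where
  "grp M i = \<lparr>carrier = mgr M i, mult = mad M i, one = mzr M i\<rparr>"

lemma grp_simps[simp]: "carrier (grp M i) = mgr M i" "mult (grp M i) = mad M i" "one (grp M i) = mzr M i"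
  by (simp_all add: grp_def)

lemma msum_grp: "msum M i g S = finprod (grp M i) g S"
  by (simp add: msum_def grp_def)

locale dgm =
  fixes A :: "('a::ring_1) dg_alg" and M :: "('a, 'm) dg_mod"
  assumes alg: "dg_algebra A" and pos: "positively_graded A" and modl: "dg_module A M"
begin

lemmas ax = modl[unfolded dg_module_def]
lemma ax0: "mzr M i \<in> mgr M i \<and>
          (\<forall>x\<in>mgr M i. \<forall>y\<in>mgr M i. mad M i x y \<in> mgr M i \<and> mad M i x y = mad M i y x) \<and>
          (\<forall>x\<in>mgr M i. \<forall>y\<in>mgr M i. \<forall>z\<in>mgr M i. mad M i (mad M i x y) z = mad M i x (mad M i y z)) \<and>
          (\<forall>x\<in>mgr M i. mad M i (mzr M i) x = x) \<and>
          (\<forall>x\<in>mgr M i. \<exists>y\<in>mgr M i. mad M i x y = mzr M i)"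
  using ax[THEN conjunct1] by (rule spec)
lemmas ax1 = ax[THEN conjunct2, THEN conjunct1, rule_format]
lemmas ax2 = ax[THEN conjunct2, THEN conjunct2, THEN conjunct1, rule_format]
lemmas ax3 = ax[THEN conjunct2, THEN conjunct2, THEN conjunct2, THEN conjunct1, rule_format]
lemmas ax4 = ax[THEN conjunct2, THEN conjunct2, THEN conjunct2, THEN conjunct2, THEN conjunct1, rule_format]
lemmas ax5 = ax[THEN conjunct2, THEN conjunct2, THEN conjunct2, THEN conjunct2, THEN conjunct2, THEN conjunct1, rule_format]
lemmas ax6 = ax[THEN conjunct2, THEN conjunct2, THEN conjunct2, THEN conjunct2, THEN conjunct2, THEN conjunct2, THEN conjunct1, rule_format]
lemmas ax7 = ax[THEN conjunct2, THEN conjunct2, THEN conjunct2, THEN conjunct2, THEN conjunct2, THEN conjunct2, THEN conjunct2, THEN conjunct1, rule_format]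
lemmas ax8 = ax[THEN conjunct2, THEN conjunct2, THEN conjunct2, THEN conjunct2, THEN conjunct2, THEN conjunct2, THEN conjunct2, THEN conjunct2, rule_format]

lemma zero_in: "mzr M i \<in> mgr M i" using ax0 by blast
lemma mad_in: "x \<in> mgr M i \<Longrightarrow> y \<in> mgr M i \<Longrightarrow> mad M i x y \<in> mgr M i"
  using ax0 by blast
lemma mad_comm: "x \<in> mgr M i \<Longrightarrow> y \<in> mgr M i \<Longrightarrow> mad M i x y = mad M i y x"
  using ax0 by blast
lemma mad_assoc: "x \<in> mgr M i \<Longrightarrow> y \<in> mgr M i \<Longrightarrow> z \<in> mgr M i \<Longrightarrow> mad M i (mad M i x y) z = mad M i x (mad M i y z)"
  using ax0 by blast
lemma mad_lone: "x \<in> mgr M i \<Longrightarrow> mad M i (mzr M i) x = x"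
  using ax0 by blast
lemma mad_inv: "x \<in> mgr M i \<Longrightarrow> \<exists>y\<in>mgr M i. mad M i x y = mzr M i"
  using ax0 by blast
lemma msm_in: "a \<in> agr A j \<Longrightarrow> x \<in> mgr M i \<Longrightarrow> msm M j i a x \<in> mgr M (i + j)"
  by (rule ax1)
lemma msm_addl: "a \<in> agr A j \<Longrightarrow> b \<in> agr A j \<Longrightarrow> x \<in> mgr M i \<Longrightarrow> msm M j i (a + b) x = mad M (i + j) (msm M j i a x) (msm M j i b x)"
  by (rule ax2)
lemma msm_addr: "a \<in> agr A j \<Longrightarrow> x \<in> mgr M i \<Longrightarrow> y \<in> mgr M i \<Longrightarrow> msm M j i a (mad M i x y) = mad M (i + j) (msm M j i a x) (msm M j i a y)"
  by (rule ax3)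
lemma msm_one: "x \<in> mgr M i \<Longrightarrow> msm M 0 i 1 x = x"
  by (rule ax4)
lemma msm_msm: "a \<in> agr A j \<Longrightarrow> b \<in> agr A k \<Longrightarrow> x \<in> mgr M i \<Longrightarrow> msm M k (i + j) b (msm M j i a x) = msm M (j + k) i (b * a) x"
  by (rule ax5)
lemma mdf_in: "x \<in> mgr M i \<Longrightarrow> mdf M i x \<in> mgr M (i - 1)"
  using ax6 by blast
lemma mdf_mdf: "x \<in> mgr M i \<Longrightarrow> mdf M (i - 1) (mdf M i x) = mzr M (i - 2)"
  using ax6 by blast
lemma mdf_add: "x \<in> mgr M i \<Longrightarrow> y \<in> mgr M i \<Longrightarrow> mdf M i (mad M i x y) = mad M (i - 1) (mdf M i x) (mdf M i y)"
  by (rule ax7)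
lemma leib: "a \<in> agr A j \<Longrightarrow> x \<in> mgr M i \<Longrightarrow> mdf M (i + j) (msm M j i a x) =
          mad M (i + j - 1) (msm M (j - 1) i (adf A a) x) (msm M j (i - 1) (sgn_int j * a) (mdf M i x))"
  by (rule ax8)

lemmas alx = alg[unfolded dg_algebra_def]
lemma zero_agr: "0 \<in> agr A j" using alx by blast
lemma agr_add: "a \<in> agr A j \<Longrightarrow> b \<in> agr A j \<Longrightarrow> a + b \<in> agr A j" using alx by blast
lemma agr_neg: "a \<in> agr A j \<Longrightarrow> - a \<in> agr A j" using alx by blast
lemma agr_mult: "a \<in> agr A j \<Longrightarrow> b \<in> agr A k \<Longrightarrow> a * b \<in> agr A (j + k)" using alx by blast
lemma one_agr: "1 \<in> agr A 0" using alx by blast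
lemma adf_agr: "a \<in> agr A j \<Longrightarrow> adf A a \<in> agr A (j - 1)" using alx by blast
lemma G: "comm_group (grp M i)"
proof (rule comm_groupI)
  fix x assume x: "x \<in> carrier (grp M i)"
  then obtain y where "y \<in> mgr M i" "mad M i x y = mzr M i" using mad_inv by auto
  then show "\<exists>y\<in>carrier (grp M i). y \<otimes>\<^bsub>grp M i\<^esub> x = \<one>\<^bsub>grp M i\<^esub>"
    using x mad_comm[of x i y] by auto
qed (auto simp: zero_in mad_in mad_assoc mad_lone intro: mad_comm)

lemma sgn_agr: "a \<in> agr A j \<Longrightarrow> sgn_int k * a \<in> agr A j" by (simp add: sgn_int_def agr_neg)
lemma agr_negdeg: "j < 0 \<Longrightarrow> agr A j = {0}" using pos by (simp add: positively_graded_def)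

lemma idem_one: "y \<in> mgr M i \<Longrightarrow> mad M i y y = y \<Longrightarrow> y = mzr M i"
proof -
  assume y: "y \<in> mgr M i" and e: "mad M i y y = y"
  interpret comm_group "grp M i" by (rule G)
  from e have "y \<otimes>\<^bsub>grp M i\<^esub> y = y" by simp
  with y show ?thesis using l_cancel_one[of y y] by simp
qed

lemma msm_zero_sc: "x \<in> mgr M i \<Longrightarrow> msm M j i 0 x = mzr M (i + j)"
proof -
  assume x: "x \<in> mgr M i"
  have "msm M j i (0 + 0) x = mad M (i + j) (msm M j i 0 x) (msm M j i 0 x)"
    by (rule msm_addl[OF zero_agr zero_agr x])
  then have "mad M (i + j) (msm M j i 0 x) (msm M j i 0 x) = msm M j i 0 x" by simp
  then show ?thesis using msm_in[OF zero_agr x] by (intro idem_one)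
qed

lemma msm_zero_v: "a \<in> agr A j \<Longrightarrow> msm M j i a (mzr M i) = mzr M (i + j)"
proof -
  assume a: "a \<in> agr A j"
  interpret comm_group "grp M i" by (rule G)
  have "mad M i (mzr M i) (mzr M i) = mzr M i" using zero_in by (metis grp_simps l_one)
  then have "mad M (i + j) (msm M j i a (mzr M i)) (msm M j i a (mzr M i)) = msm M j i a (mzr M i)"
    using msm_addr[OF a zero_in zero_in, of i] by simp
  then show ?thesis using msm_in[OF a zero_in] by (intro idem_one)
qed

lemma mdf_zero: "mdf M i (mzr M i) = mzr M (i - 1)"
proof -
  interpret comm_group "grp M i" by (rule G)
  have "mad M i (mzr M i) (mzr M i) = mzr M i" using zero_in by (metis grp_simps l_one)
  then have "mad M (i - 1) (mdf M i (mzr M i)) (mdf M i (mzr M i)) = mdf M i (mzr M i)"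
    using mdf_add[OF zero_in zero_in, of i] by simp
  then show ?thesis using mdf_in[OF zero_in] by (intro idem_one)
qed


lemma msm_fp:
  assumes a: "a \<in> agr A j" and f: "f \<in> S \<rightarrow> mgr M i"
  shows "msm M j i a (finprod (grp M i) f S) = finprod (grp M (i + j)) (\<lambda>s. msm M j i a (f s)) S"
  using f
proof (induct S rule: infinite_finite_induct)
  case (infinite S)
  interpret G1: comm_group "grp M i" by (rule G)
  interpret G2: comm_group "grp M (i + j)" by (rule G)
  show ?case using infinite by (simp add: msm_zero_v[OF a])
next
  case empty
  interpret G1: comm_group "grp M i" by (rule G)
  interpret G2: comm_group "grp M (i + j)" by (rule G)
  show ?case by (simp add: msm_zero_v[OF a])
next
  case (insert x S)
  interpret G1: comm_group "grp M i" by (rule G)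
  interpret G2: comm_group "grp M (i + j)" by (rule G)
  have fS: "f \<in> S \<rightarrow> mgr M i" and fx: "f x \<in> mgr M i" using insert(4) by auto
  have gS: "(\<lambda>s. msm M j i a (f s)) \<in> S \<rightarrow> mgr M (i + j)" using fS msm_in[OF a] by auto
  have fp: "finprod (grp M i) f S \<in> mgr M i" using G1.finprod_closed[of f S] fS by simp
  have "msm M j i a (finprod (grp M i) f (insert x S)) = msm M j i a (mad M i (f x) (finprod (grp M i) f S))"
    using G1.finprod_insert[of S x f] insert(1,2) fS fx by simp
  also have "\<dots> = mad M (i + j) (msm M j i a (f x)) (msm M j i a (finprod (grp M i) f S))"
    by (rule msm_addr[OF a fx fp])
  also have "\<dots> = mad M (i + j) (msm M j i a (f x)) (finprod (grp M (i + j)) (\<lambda>s. msm M j i a (f s)) S)"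
    using insert(3)[OF fS] by simp
  also have "\<dots> = finprod (grp M (i + j)) (\<lambda>s. msm M j i a (f s)) (insert x S)"
    using G2.finprod_insert[of S x "\<lambda>s. msm M j i a (f s)"] insert(1,2) gS msm_in[OF a fx] by simp
  finally show ?case .
qed

lemma mdf_fp:
  assumes f: "f \<in> S \<rightarrow> mgr M i"
  shows "mdf M i (finprod (grp M i) f S) = finprod (grp M (i - 1)) (\<lambda>s. mdf M i (f s)) S"
  using f
proof (induct S rule: infinite_finite_induct)
  case (infinite S)
  interpret G1: comm_group "grp M i" by (rule G)
  interpret G2: comm_group "grp M (i - 1)" by (rule G)
  show ?case using infinite by (simp add: mdf_zero)
next
  case empty
  interpret G1: comm_group "grp M i" by (rule G)
  interpret G2: comm_group "grp M (i - 1)" by (rule G)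
  show ?case by (simp add: mdf_zero)
next
  case (insert x S)
  interpret G1: comm_group "grp M i" by (rule G)
  interpret G2: comm_group "grp M (i - 1)" by (rule G)
  have fS: "f \<in> S \<rightarrow> mgr M i" and fx: "f x \<in> mgr M i" using insert(4) by auto
  have gS: "(\<lambda>s. mdf M i (f s)) \<in> S \<rightarrow> mgr M (i - 1)" using fS mdf_in by auto
  have fp: "finprod (grp M i) f S \<in> mgr M i" using G1.finprod_closed[of f S] fS by simp
  have "mdf M i (finprod (grp M i) f (insert x S)) = mdf M i (mad M i (f x) (finprod (grp M i) f S))"
    using G1.finprod_insert[of S x f] insert(1,2) fS fx by simp
  also have "\<dots> = mad M (i - 1) (mdf M i (f x)) (mdf M i (finprod (grp M i) f S))"
    by (rule mdf_add[OF fx fp])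
  also have "\<dots> = mad M (i - 1) (mdf M i (f x)) (finprod (grp M (i - 1)) (\<lambda>s. mdf M i (f s)) S)"
    using insert(3)[OF fS] by simp
  also have "\<dots> = finprod (grp M (i - 1)) (\<lambda>s. mdf M i (f s)) (insert x S)"
    using G2.finprod_insert[of S x "\<lambda>s. mdf M i (f s)"] insert(1,2) gS mdf_in[OF fx] by simp
  finally show ?case .
qed

end




definition cs :: "('m, 'z) monoid_scheme \<Rightarrow> 'm set \<Rightarrow> 'm \<Rightarrow> 'm set" where
  "cs G U x = {x \<otimes>\<^bsub>G\<^esub> u | u. u \<in> U}"

context comm_group begin

lemma cs_mem: "subgroup U G \<Longrightarrow> x \<in> carrier G \<Longrightarrow> x \<in> cs G U x"
  unfolding cs_def using subgroup.one_closed by force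

lemma cs_sub: "subgroup U G \<Longrightarrow> x \<in> carrier G \<Longrightarrow> cs G U x \<subseteq> carrier G"
  unfolding cs_def using subgroup.subset by blast

lemma cs_shift:
  assumes U: "subgroup U G" and y: "y \<in> carrier G" and u: "u \<in> U"
  shows "cs G U (y \<otimes> u) = cs G U y"
proof -
  have uc: "u \<in> carrier G" using subgroup.subset[OF U] u by blast
  show ?thesis unfolding cs_def
  proof (intro equalityI subsetI)
    fix z assume "z \<in> {y \<otimes> u \<otimes> v |v. v \<in> U}"
    then obtain v where v: "v \<in> U" "z = y \<otimes> u \<otimes> v" by blast
    have vc: "v \<in> carrier G" using subgroup.subset[OF U] v by blast
    have "z = y \<otimes> (u \<otimes> v)" using v y uc vc by (simp add: m_assoc)
    moreover have "u \<otimes> v \<in> U" by (rule subgroup.m_closed[OF U u v(1)])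
    ultimately show "z \<in> {y \<otimes> v |v. v \<in> U}" by blast
  next
    fix z assume "z \<in> {y \<otimes> v |v. v \<in> U}"
    then obtain v where v: "v \<in> U" "z = y \<otimes> v" by blast
    have vc: "v \<in> carrier G" using subgroup.subset[OF U] v by blast
    have "u \<otimes> (inv u \<otimes> v) = v" using uc vc by (simp add: m_assoc[symmetric])
    then have "z = y \<otimes> u \<otimes> (inv u \<otimes> v)" using v y uc vc by (simp add: m_assoc)
    moreover have "inv u \<otimes> v \<in> U" by (rule subgroup.m_closed[OF U subgroup.m_inv_closed[OF U u] v(1)])
    ultimately show "z \<in> {y \<otimes> u \<otimes> v |v. v \<in> U}" by blast
  qed
qed

lemma cs_eq_iff:
  assumes U: "subgroup U G" and x: "x \<in> carrier G" and y: "y \<in> carrier G"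
  shows "cs G U x = cs G U y \<longleftrightarrow> x \<otimes> inv y \<in> U"
proof
  assume "cs G U x = cs G U y"
  then have "x \<in> cs G U y" using cs_mem[OF U x] by simp
  then obtain u where u: "u \<in> U" "x = y \<otimes> u" unfolding cs_def by blast
  have uc: "u \<in> carrier G" using subgroup.subset[OF U] u by blast
  have "x \<otimes> inv y = u" using u y uc by (simp add: m_comm[of y u] m_assoc)
  then show "x \<otimes> inv y \<in> U" using u by simp
next
  assume h: "x \<otimes> inv y \<in> U"
  have "y \<otimes> (x \<otimes> inv y) = x" using x y by (simp add: m_comm[of x "inv y"] m_assoc[symmetric])
  then show "cs G U x = cs G U y" using cs_shift[OF U y h] by simp
qed

lemma cs_one: "subgroup U G \<Longrightarrow> cs G U \<one> = U"
  unfolding cs_def using subgroup.subset by force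

lemma cs_eq_U: "subgroup U G \<Longrightarrow> x \<in> carrier G \<Longrightarrow> cs G U x = U \<longleftrightarrow> x \<in> U"
  using cs_eq_iff[of U x \<one>] cs_one[of U] by simp

lemma cs_add:
  assumes U: "subgroup U G" and x: "x \<in> carrier G" and y: "y \<in> carrier G"
  shows "{a \<otimes> b | a b. a \<in> cs G U x \<and> b \<in> cs G U y} = cs G U (x \<otimes> y)"
proof (intro equalityI subsetI)
  fix z assume "z \<in> {a \<otimes> b | a b. a \<in> cs G U x \<and> b \<in> cs G U y}"
  then obtain u v where uv: "u \<in> U" "v \<in> U" "z = (x \<otimes> u) \<otimes> (y \<otimes> v)" unfolding cs_def by blast
  have uc: "u \<in> carrier G" "v \<in> carrier G" using subgroup.subset[OF U] uv by blast+
  have "z = (x \<otimes> y) \<otimes> (u \<otimes> v)" using uv(3) x y uc by (simp add: m_ac)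
  moreover have "u \<otimes> v \<in> U" by (rule subgroup.m_closed[OF U uv(1) uv(2)])
  ultimately show "z \<in> cs G U (x \<otimes> y)" unfolding cs_def by blast
next
  fix z assume "z \<in> cs G U (x \<otimes> y)"
  then obtain w where w: "w \<in> U" "z = (x \<otimes> y) \<otimes> w" unfolding cs_def by blast
  have wc: "w \<in> carrier G" using subgroup.subset[OF U] w by blast
  have "z = (x \<otimes> w) \<otimes> (y \<otimes> \<one>)" using w x y wc by (simp add: m_ac)
  moreover have "x \<otimes> w \<in> cs G U x" "y \<otimes> \<one> \<in> cs G U y" unfolding cs_def
    using w subgroup.one_closed[OF U] by blast+
  ultimately show "z \<in> {a \<otimes> b | a b. a \<in> cs G U x \<and> b \<in> cs G U y}" by blast
qed

end

lemma cs_map: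
  assumes G: "comm_group G" and H: "comm_group H" and U: "subgroup U G" and V: "subgroup V H"
    and fc: "\<And>a. a \<in> carrier G \<Longrightarrow> f a \<in> carrier H"
    and fh: "\<And>a b. a \<in> carrier G \<Longrightarrow> b \<in> carrier G \<Longrightarrow> f (a \<otimes>\<^bsub>G\<^esub> b) = f a \<otimes>\<^bsub>H\<^esub> f b"
    and fU: "\<And>a. a \<in> U \<Longrightarrow> f a \<in> V"
    and x: "x \<in> carrier G"
  shows "{f a \<otimes>\<^bsub>H\<^esub> v | a v. a \<in> cs G U x \<and> v \<in> V} = cs H V (f x)"
proof -
  interpret G: comm_group G by (rule G)
  interpret H: comm_group H by (rule H)
  show ?thesis
  proof (intro equalityI subsetI)
    fix z assume "z \<in> {f a \<otimes>\<^bsub>H\<^esub> v | a v. a \<in> cs G U x \<and> v \<in> V}"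
    then obtain u v where uv: "u \<in> U" "v \<in> V" "z = f (x \<otimes>\<^bsub>G\<^esub> u) \<otimes>\<^bsub>H\<^esub> v" unfolding cs_def by blast
    have uc: "u \<in> carrier G" using subgroup.subset[OF U] uv by blast
    have vc: "v \<in> carrier H" using subgroup.subset[OF V] uv by blast
    have fuv: "f u \<in> V" using fU uv by blast
    have fuc: "f u \<in> carrier H" using fc uc by blast
    have "z = f x \<otimes>\<^bsub>H\<^esub> (f u \<otimes>\<^bsub>H\<^esub> v)" using uv(3) fh[OF x uc] fc[OF x] fuc vc by (simp add: H.m_assoc)
    moreover have "f u \<otimes>\<^bsub>H\<^esub> v \<in> V" by (rule subgroup.m_closed[OF V fuv uv(2)])
    ultimately show "z \<in> cs H V (f x)" unfolding cs_def by blast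
  next
    fix z assume "z \<in> cs H V (f x)"
    then obtain v where v: "v \<in> V" "z = f x \<otimes>\<^bsub>H\<^esub> v" unfolding cs_def by blast
    have "x \<otimes>\<^bsub>G\<^esub> \<one>\<^bsub>G\<^esub> = x" using x by simp
    then have "z = f (x \<otimes>\<^bsub>G\<^esub> \<one>\<^bsub>G\<^esub>) \<otimes>\<^bsub>H\<^esub> v" using v by simp
    moreover have "x \<otimes>\<^bsub>G\<^esub> \<one>\<^bsub>G\<^esub> \<in> cs G U x" unfolding cs_def using subgroup.one_closed[OF U] by blast
    ultimately show "z \<in> {f a \<otimes>\<^bsub>H\<^esub> v | a v. a \<in> cs G U x \<and> v \<in> V}" using v by blast
  qed
qed




definition cq :: "('a, 'f) dg_mod \<Rightarrow> (int \<Rightarrow> 'f set) \<Rightarrow> int \<Rightarrow> 'f \<Rightarrow> 'f set" where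
  "cq M U i x = {mad M i x u | u. u \<in> U i}"

lemma cq_cs: "cq M U i x = cs (grp M i) (U i) x" by (simp add: cq_def cs_def)

definition qmod :: "('a, 'f) dg_mod \<Rightarrow> (int \<Rightarrow> 'f set) \<Rightarrow> ('a, 'f set) dg_mod" where
  "qmod M U = \<lparr>mgr = (\<lambda>i. cq M U i ` mgr M i), mzr = U,
      mad = (\<lambda>i X Y. {mad M i x y | x y. x \<in> X \<and> y \<in> Y}),
      msm = (\<lambda>j i a X. {mad M (i + j) (msm M j i a x) u | x u. x \<in> X \<and> u \<in> U (i + j)}),
      mdf = (\<lambda>i X. {mad M (i - 1) (mdf M i x) u | x u. x \<in> X \<and> u \<in> U (i - 1)})\<rparr>"

lemma qmod_simps: "mgr (qmod M U) i = cq M U i ` mgr M i" "mzr (qmod M U) i = U i"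
  by (simp_all add: qmod_def)

lemma ball_img: "(\<forall>X\<in>f ` S. P X) = (\<forall>x\<in>S. P (f x))" by auto
lemma bex_img: "(\<exists>X\<in>f ` S. P X) = (\<exists>x\<in>S. P (f x))" by auto

locale qdgm = dgm +
  fixes U :: "int \<Rightarrow> 'b set"
  assumes sub: "subgroup (U i) (grp M i)"
    and msmU: "a \<in> agr A j \<Longrightarrow> x \<in> U i \<Longrightarrow> msm M j i a x \<in> U (i + j)"
    and mdfU: "x \<in> U i \<Longrightarrow> mdf M i x \<in> U (i - 1)"
begin

abbreviation "Q \<equiv> qmod M U"
abbreviation "c i x \<equiv> cq M U i x"

lemma U_sub: "x \<in> U i \<Longrightarrow> x \<in> mgr M i" using subgroup.subset[OF sub] by auto

lemma q_in: "x \<in> mgr M i \<Longrightarrow> c i x \<in> mgr Q i" by (simp add: qmod_simps)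

lemma q_zero: "mzr Q i = c i (mzr M i)"
proof -
  interpret comm_group "grp M i" by (rule G)
  show ?thesis using cs_one[OF sub] by (simp add: qmod_simps cq_cs)
qed

lemma q_eqU: "x \<in> mgr M i \<Longrightarrow> c i x = U i \<longleftrightarrow> x \<in> U i"
proof -
  interpret comm_group "grp M i" by (rule G)
  assume "x \<in> mgr M i" then show ?thesis using cs_eq_U[OF sub] by (simp add: cq_cs)
qed

lemma q_mad: "x \<in> mgr M i \<Longrightarrow> y \<in> mgr M i \<Longrightarrow> mad Q i (c i x) (c i y) = c i (mad M i x y)"
proof -
  interpret comm_group "grp M i" by (rule G)
  assume "x \<in> mgr M i" "y \<in> mgr M i"
  then show ?thesis using cs_add[OF sub, of x y] by (simp add: qmod_def cq_cs)
qed

lemma q_msm: "a \<in> agr A j \<Longrightarrow> x \<in> mgr M i \<Longrightarrow> msm Q j i a (c i x) = c (i + j) (msm M j i a x)"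
proof -
  assume a: "a \<in> agr A j" and x: "x \<in> mgr M i"
  have "{mad M (i + j) (msm M j i a z) u | z u. z \<in> cs (grp M i) (U i) x \<and> u \<in> U (i + j)}
        = cs (grp M (i + j)) (U (i + j)) (msm M j i a x)"
    using cs_map[OF G[of i] G[of "i + j"] sub[of i] sub[of "i + j"], of "msm M j i a" x] msm_in[OF a] msm_addr[OF a] msmU[OF a] x by simp
  then show ?thesis by (simp add: qmod_def cq_cs)
qed

lemma q_mdf: "x \<in> mgr M i \<Longrightarrow> mdf Q i (c i x) = c (i - 1) (mdf M i x)"
proof -
  assume x: "x \<in> mgr M i"
  have "{mad M (i - 1) (mdf M i z) u | z u. z \<in> cs (grp M i) (U i) x \<and> u \<in> U (i - 1)}
        = cs (grp M (i - 1)) (U (i - 1)) (mdf M i x)"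
    using cs_map[OF G[of i] G[of "i - 1"] sub[of i] sub[of "i - 1"], of "mdf M i" x] mdf_in mdf_add mdfU x by simp
  then show ?thesis by (simp add: qmod_def cq_cs)
qed

lemma qE: "X \<in> mgr Q i \<Longrightarrow> (\<And>x. x \<in> mgr M i \<Longrightarrow> X = c i x \<Longrightarrow> P) \<Longrightarrow> P"
  by (auto simp: qmod_simps)

lemma q_module: "dg_module A Q"
  unfolding dg_module_def
proof (intro conjI allI ballI)
  fix i
  show "mzr Q i \<in> mgr Q i" using q_zero q_in zero_in by simp
  fix X Y assume X: "X \<in> mgr Q i" and Y: "Y \<in> mgr Q i"
  then obtain x y where x: "x \<in> mgr M i" "X = c i x" and y: "y \<in> mgr M i" "Y = c i y" by (metis qE)
  show "mad Q i X Y \<in> mgr Q i" using x y q_mad q_in mad_in by simp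
  show "mad Q i X Y = mad Q i Y X" using x y q_mad mad_comm by simp
  fix Z assume Z: "Z \<in> mgr Q i"
  then obtain z where z: "z \<in> mgr M i" "Z = c i z" by (metis qE)
  show "mad Q i (mad Q i X Y) Z = mad Q i X (mad Q i Y Z)" using x y z q_mad mad_in mad_assoc by simp
next
  fix i X assume X: "X \<in> mgr Q i"
  then obtain x where x: "x \<in> mgr M i" "X = c i x" by (metis qE)
  show "mad Q i (mzr Q i) X = X" using x q_zero q_mad zero_in mad_lone by simp
  obtain y where y: "y \<in> mgr M i" "mad M i x y = mzr M i" using mad_inv x by blast
  show "\<exists>Y\<in>mgr Q i. mad Q i X Y = mzr Q i"
    using x y q_in q_mad q_zero by (intro bexI[of _ "c i y"]) auto
next
  fix i j a X assume a: "a \<in> agr A j" and X: "X \<in> mgr Q i"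
  then obtain x where x: "x \<in> mgr M i" "X = c i x" by (metis qE)
  show "msm Q j i a X \<in> mgr Q (i + j)" using x a q_msm q_in msm_in by simp
  fix b assume b: "b \<in> agr A j"
  show "msm Q j i (a + b) X = mad Q (i + j) (msm Q j i a X) (msm Q j i b X)"
    using x a b q_msm q_mad msm_in msm_addl agr_add by simp
next
  fix i j a X Y assume a: "a \<in> agr A j" and X: "X \<in> mgr Q i" and Y: "Y \<in> mgr Q i"
  then obtain x y where x: "x \<in> mgr M i" "X = c i x" and y: "y \<in> mgr M i" "Y = c i y" by (metis qE)
  show "msm Q j i a (mad Q i X Y) = mad Q (i + j) (msm Q j i a X) (msm Q j i a Y)"
    using x y a q_msm q_mad msm_in msm_addr mad_in by simp
next
  fix i X assume X: "X \<in> mgr Q i"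
  then obtain x where x: "x \<in> mgr M i" "X = c i x" by (metis qE)
  show "msm Q 0 i 1 X = X" using x q_msm[OF one_agr] msm_one by simp
  show "mdf Q i X \<in> mgr Q (i - 1)" using x q_mdf q_in mdf_in by simp
  show "mdf Q (i - 1) (mdf Q i X) = mzr Q (i - 2)" using x q_mdf q_zero mdf_in mdf_mdf[of x i] by simp
next
  fix i j k a b X assume a: "a \<in> agr A j" and b: "b \<in> agr A k" and X: "X \<in> mgr Q i"
  then obtain x where x: "x \<in> mgr M i" "X = c i x" by (metis qE)
  show "msm Q k (i + j) b (msm Q j i a X) = msm Q (j + k) i (b * a) X"
  proof -
    have ba: "b * a \<in> agr A (j + k)" using agr_mult[OF b a] by (simp add: add.commute)
    have "msm Q k (i + j) b (msm Q j i a X) = c (i + j + k) (msm M k (i + j) b (msm M j i a x))"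
      using x a b q_msm[OF a x(1)] q_msm[OF b msm_in[OF a x(1)]] by simp
    also have "\<dots> = c (i + (j + k)) (msm M (j + k) i (b * a) x)"
      using msm_msm[OF a b x(1)] by (simp add: add.assoc)
    also have "\<dots> = msm Q (j + k) i (b * a) X" using q_msm[OF ba x(1)] x by simp
    finally show ?thesis .
  qed
next
  fix i X Y assume X: "X \<in> mgr Q i" and Y: "Y \<in> mgr Q i"
  then obtain x y where x: "x \<in> mgr M i" "X = c i x" and y: "y \<in> mgr M i" "Y = c i y" by (metis qE)
  show "mdf Q i (mad Q i X Y) = mad Q (i - 1) (mdf Q i X) (mdf Q i Y)"
    using x y q_mdf q_mad mad_in mdf_in mdf_add by simp
next
  fix i j a X assume a: "a \<in> agr A j" and X: "X \<in> mgr Q i"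
  then obtain x where x: "x \<in> mgr M i" "X = c i x" by (metis qE)
  have e1: "i + (j - 1) = i + j - 1" "i - 1 + j = i + j - 1" by simp_all
  have m1: "msm M (j - 1) i (adf A a) x \<in> mgr M (i + j - 1)" using msm_in[OF adf_agr[OF a] x(1)] e1 by simp
  have m2: "msm M j (i - 1) (sgn_int j * a) (mdf M i x) \<in> mgr M (i + j - 1)"
    using msm_in[OF sgn_agr[OF a] mdf_in[OF x(1)]] e1 by simp
  have "mdf Q (i + j) (msm Q j i a X) = c (i + j - 1) (mdf M (i + j) (msm M j i a x))"
    using x a q_msm q_mdf msm_in by simp
  also have "\<dots> = mad Q (i + j - 1) (c (i + j - 1) (msm M (j - 1) i (adf A a) x)) (c (i + j - 1) (msm M j (i - 1) (sgn_int j * a) (mdf M i x)))"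
    using q_mad[OF m1 m2] leib[OF a x(1)] by simp
  also have "\<dots> = mad Q (i + j - 1) (msm Q (j - 1) i (adf A a) X) (msm Q j (i - 1) (sgn_int j * a) (mdf Q i X))"
    using x q_msm[OF adf_agr[OF a] x(1)] q_msm[OF sgn_agr[OF a] mdf_in[OF x(1)]] q_mdf[OF x(1)] e1 by simp
  finally show "mdf Q (i + j) (msm Q j i a X) = mad Q (i + j - 1) (msm Q (j - 1) i (adf A a) X) (msm Q j (i - 1) (sgn_int j * a) (mdf Q i X))" .
qed

lemma q_hom: "dg_hom A M Q c"
  unfolding dg_hom_def using q_in q_mad q_mdf q_msm by simp

end



context dgm begin

lemma sub_module:
  assumes S1: "\<And>i. S i \<subseteq> mgr M i" and S2: "\<And>i. mzr M i \<in> S i"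
    and S3: "\<And>i x y. x \<in> S i \<Longrightarrow> y \<in> S i \<Longrightarrow> mad M i x y \<in> S i"
    and S4: "\<And>i x. x \<in> S i \<Longrightarrow> \<exists>y\<in>S i. mad M i x y = mzr M i"
    and S5: "\<And>i j a x. a \<in> agr A j \<Longrightarrow> x \<in> S i \<Longrightarrow> msm M j i a x \<in> S (i + j)"
    and S6: "\<And>i x. x \<in> S i \<Longrightarrow> mdf M i x \<in> S (i - 1)"
  shows "dg_module A (M\<lparr>mgr := S\<rparr>)"
proof -
  have e: "mgr (M\<lparr>mgr := S\<rparr>) = S" "mad (M\<lparr>mgr := S\<rparr>) = mad M" "mzr (M\<lparr>mgr := S\<rparr>) = mzr M"
     "msm (M\<lparr>mgr := S\<rparr>) = msm M" "mdf (M\<lparr>mgr := S\<rparr>) = mdf M" by simp_all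
  show ?thesis
  unfolding dg_module_def e
proof (intro conjI allI ballI)
  fix i
  show "mzr M i \<in> S i" by (rule S2)
  fix x y assume x: "x \<in> S i" and y: "y \<in> S i"
  have xm: "x \<in> mgr M i" and ym: "y \<in> mgr M i" using x y S1 by auto
  show "mad M i x y \<in> S i" using S3 x y .
  show "mad M i x y = mad M i y x" using mad_comm xm ym .
  fix z assume z: "z \<in> S i"
  then show "mad M i (mad M i x y) z = mad M i x (mad M i y z)" using mad_assoc xm ym S1 by blast
next
  fix i x assume x: "x \<in> S i"
  have xm: "x \<in> mgr M i" using x S1 by auto
  show "mad M i (mzr M i) x = x" using mad_lone xm .
  show "\<exists>y\<in>S i. mad M i x y = mzr M i" using S4 x .
  show "msm M 0 i 1 x = x" using msm_one xm .
  show "mdf M i x \<in> S (i - 1)" using S6 x .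
  show "mdf M (i - 1) (mdf M i x) = mzr M (i - 2)" using mdf_mdf xm .
next
  fix i j a x assume a: "a \<in> agr A j" and x: "x \<in> S i"
  have xm: "x \<in> mgr M i" using x S1 by auto
  show "msm M j i a x \<in> S (i + j)" using S5 a x .
  show "mdf M (i + j) (msm M j i a x) =
          mad M (i + j - 1) (msm M (j - 1) i (adf A a) x) (msm M j (i - 1) (sgn_int j * a) (mdf M i x))"
    using leib a xm .
  fix b assume b: "b \<in> agr A j"
  show "msm M j i (a + b) x = mad M (i + j) (msm M j i a x) (msm M j i b x)" using msm_addl a b xm .
next
  fix i j a x y assume a: "a \<in> agr A j" and x: "x \<in> S i" and y: "y \<in> S i"
  have xm: "x \<in> mgr M i" and ym: "y \<in> mgr M i" using x y S1 by auto
  show "msm M j i a (mad M i x y) = mad M (i + j) (msm M j i a x) (msm M j i a y)" using msm_addr a xm ym .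
next
  fix i j k a b x assume a: "a \<in> agr A j" and b: "b \<in> agr A k" and x: "x \<in> S i"
  have xm: "x \<in> mgr M i" using x S1 by auto
  show "msm M k (i + j) b (msm M j i a x) = msm M (j + k) i (b * a) x" using msm_msm a b xm .
next
  fix i x y assume x: "x \<in> S i" and y: "y \<in> S i"
  have xm: "x \<in> mgr M i" and ym: "y \<in> mgr M i" using x y S1 by auto
  show "mdf M i (mad M i x y) = mad M (i - 1) (mdf M i x) (mdf M i y)" using mdf_add xm ym .
qed
qed

definition tm :: "int \<Rightarrow> (int \<Rightarrow> 'm \<Rightarrow> 'a) \<Rightarrow> int \<times> 'm \<Rightarrow> 'm" where
  "tm n c = (\<lambda>(j, e). msm M (n - j) j (c j e) e)"

definition supp :: "(int \<Rightarrow> 'm \<Rightarrow> 'a) \<Rightarrow> (int \<times> 'm) set" where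
  "supp c = {(j, e). c j e \<noteq> 0}"

lemma lincomb_tm: "lincomb M n c = finprod (grp M n) (tm n c) (supp c)"
  by (simp add: lincomb_def msum_grp tm_def supp_def)

lemma coeff_okD:
  assumes "coeff_ok A (E' :: int \<Rightarrow> 'm set) n c"
  shows "e \<in> E' j \<Longrightarrow> c j e \<in> agr A (n - j)" "e \<notin> E' j \<Longrightarrow> c j e = 0" "finite (supp c)"
  using assms unfolding coeff_ok_def supp_def by (metis (mono_tags) singletonD)+

lemma supp_E: "coeff_ok A (E' :: int \<Rightarrow> 'm set) n c \<Longrightarrow> p \<in> supp c \<Longrightarrow> snd p \<in> E' (fst p)"
  using coeff_okD(2) unfolding supp_def by fastforce

lemma tm_in:
  assumes c: "coeff_ok A (E' :: int \<Rightarrow> 'm set) n c" and EM: "\<And>j. E' j \<subseteq> mgr M j" and e: "e \<in> E' j"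
  shows "tm n c (j, e) \<in> mgr M n"
proof -
  have "msm M (n - j) j (c j e) e \<in> mgr M (j + (n - j))"
    using msm_in[OF coeff_okD(1)[OF c e]] EM e by blast
  then show ?thesis by (simp add: tm_def)
qed

lemma lc_ext:
  assumes c: "coeff_ok A (E' :: int \<Rightarrow> 'm set) n c" and EM: "\<And>j. E' j \<subseteq> mgr M j"
    and T: "finite T" "supp c \<subseteq> T" "\<And>j e. (j, e) \<in> T \<Longrightarrow> e \<in> E' j"
  shows "lincomb M n c = finprod (grp M n) (tm n c) T"
proof -
  interpret comm_group "grp M n" by (rule G)
  show ?thesis unfolding lincomb_tm
  proof (rule finprod_mono_neutral_cong_left[OF T(1) T(2)])
    fix p assume p: "p \<in> T - supp c"
    obtain j e where pe: "p = (j, e)" by (cases p)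
    have "c j e = 0" using p pe by (simp add: supp_def)
    moreover have "e \<in> mgr M j" using T(3) p pe EM by blast
    ultimately show "tm n c p = \<one>\<^bsub>grp M n\<^esub>" using msm_zero_sc[of e j "n - j"] pe by (simp add: tm_def)
  next
    show "tm n c \<in> T \<rightarrow> carrier (grp M n)" using tm_in[OF c EM] T(3) by auto
  qed simp
qed

lemma lc_in:
  assumes c: "coeff_ok A (E' :: int \<Rightarrow> 'm set) n c" and EM: "\<And>j. E' j \<subseteq> mgr M j"
  shows "lincomb M n c \<in> mgr M n"
proof -
  interpret comm_group "grp M n" by (rule G)
  have "tm n c \<in> supp c \<rightarrow> mgr M n" using tm_in[OF c EM] supp_E[OF c] by force
  then show ?thesis unfolding lincomb_tm using finprod_closed by simp
qed

lemma lc_zero: "lincomb M n (\<lambda>_ _. 0) = mzr M n"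
proof -
  interpret comm_group "grp M n" by (rule G)
  show ?thesis unfolding lincomb_tm supp_def by simp
qed

lemma coeff_ok_zero: "coeff_ok A (E' :: int \<Rightarrow> 'm set) n (\<lambda>_ _. 0)"
  unfolding coeff_ok_def using zero_agr by auto

lemma coeff_ok_add: "coeff_ok A (E' :: int \<Rightarrow> 'm set) n c \<Longrightarrow> coeff_ok A E' n d \<Longrightarrow> coeff_ok A E' n (\<lambda>j e. c j e + d j e)"
proof -
  assume c: "coeff_ok A E' n c" and d: "coeff_ok A E' n d"
  have "supp (\<lambda>j e. c j e + d j e) \<subseteq> supp c \<union> supp d" unfolding supp_def by auto
  then have "finite (supp (\<lambda>j e. c j e + d j e))" using coeff_okD(3)[OF c] coeff_okD(3)[OF d]
    by (meson finite_Un finite_subset)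
  moreover have "\<forall>j e. c j e + d j e \<in> (if e \<in> E' j then agr A (n - j) else {0})"
    using coeff_okD(1,2)[OF c] coeff_okD(1,2)[OF d] agr_add by auto
  ultimately show ?thesis unfolding coeff_ok_def supp_def by simp
qed

lemma coeff_ok_neg: "coeff_ok A (E' :: int \<Rightarrow> 'm set) n c \<Longrightarrow> coeff_ok A E' n (\<lambda>j e. - c j e)"
proof -
  assume c: "coeff_ok A E' n c"
  have "\<forall>j e. - c j e \<in> (if e \<in> E' j then agr A (n - j) else {0})"
    using coeff_okD(1,2)[OF c] agr_neg by auto
  moreover have "finite (supp (\<lambda>j e. - c j e))" using coeff_okD(3)[OF c] unfolding supp_def by simp
  ultimately show ?thesis unfolding coeff_ok_def supp_def by simp
qed

lemma coeff_ok_mult: "coeff_ok A (E' :: int \<Rightarrow> 'm set) n c \<Longrightarrow> b \<in> agr A k \<Longrightarrow> coeff_ok A E' (n + k) (\<lambda>j e. b * c j e)"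
proof -
  assume c: "coeff_ok A E' n c" and b: "b \<in> agr A k"
  have "\<forall>j e. b * c j e \<in> (if e \<in> E' j then agr A (n + k - j) else {0})"
  proof (intro allI)
    fix j e show "b * c j e \<in> (if e \<in> E' j then agr A (n + k - j) else {0})"
      using coeff_okD(1,2)[OF c, of e j] agr_mult[OF b, of "c j e" "n - j"]
      by (auto simp: add.commute add_diff_eq)
  qed
  moreover have "supp (\<lambda>j e. b * c j e) \<subseteq> supp c" unfolding supp_def by auto
  then have "finite (supp (\<lambda>j e. b * c j e))" using coeff_okD(3)[OF c] by (meson finite_subset)
  ultimately show ?thesis unfolding coeff_ok_def supp_def by simp
qed

lemma lc_add:
  assumes c: "coeff_ok A (E' :: int \<Rightarrow> 'm set) n c" and d: "coeff_ok A E' n d" and EM: "\<And>j. E' j \<subseteq> mgr M j"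
  shows "mad M n (lincomb M n c) (lincomb M n d) = lincomb M n (\<lambda>j e. c j e + d j e)"
proof -
  interpret comm_group "grp M n" by (rule G)
  let ?T = "supp c \<union> supp d"
  have T: "finite ?T" using coeff_okD(3)[OF c] coeff_okD(3)[OF d] by simp
  have TE: "\<And>j e. (j, e) \<in> ?T \<Longrightarrow> e \<in> E' j" using supp_E[OF c] supp_E[OF d] by fastforce
  have s: "supp (\<lambda>j e. c j e + d j e) \<subseteq> ?T" unfolding supp_def by auto
  have f1: "tm n c \<in> ?T \<rightarrow> carrier (grp M n)" using tm_in[OF c EM] TE by auto
  have f2: "tm n d \<in> ?T \<rightarrow> carrier (grp M n)" using tm_in[OF d EM] TE by auto
  have eq: "tm n (\<lambda>j e. c j e + d j e) p = mad M n (tm n c p) (tm n d p)" if p: "p \<in> ?T" for p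
  proof -
    obtain j e where pe: "p = (j, e)" by (cases p)
    have e: "e \<in> E' j" using TE p pe by blast
    have "msm M (n - j) j (c j e + d j e) e = mad M (j + (n - j)) (msm M (n - j) j (c j e) e) (msm M (n - j) j (d j e) e)"
      by (rule msm_addl[OF coeff_okD(1)[OF c e] coeff_okD(1)[OF d e]]) (use e EM in blast)
    then show ?thesis using pe by (simp add: tm_def)
  qed
  have "lincomb M n (\<lambda>j e. c j e + d j e) = finprod (grp M n) (tm n (\<lambda>j e. c j e + d j e)) ?T"
    by (rule lc_ext[OF coeff_ok_add[OF c d] EM T s TE])
  also have "\<dots> = finprod (grp M n) (\<lambda>p. tm n c p \<otimes>\<^bsub>grp M n\<^esub> tm n d p) ?T"
    by (rule finprod_cong') (use eq f1 f2 in \<open>auto intro!: mad_in\<close>)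
  also have "\<dots> = finprod (grp M n) (tm n c) ?T \<otimes>\<^bsub>grp M n\<^esub> finprod (grp M n) (tm n d) ?T"
    using finprod_multf[OF f1 f2] .
  also have "\<dots> = mad M n (lincomb M n c) (lincomb M n d)"
    using lc_ext[OF c EM T _ TE] lc_ext[OF d EM T _ TE] by simp
  finally show ?thesis by simp
qed

lemma lc_msm:
  assumes c: "coeff_ok A (E' :: int \<Rightarrow> 'm set) n c" and EM: "\<And>j. E' j \<subseteq> mgr M j" and b: "b \<in> agr A k"
  shows "msm M k n b (lincomb M n c) = lincomb M (n + k) (\<lambda>j e. b * c j e)"
proof -
  interpret G1: comm_group "grp M n" by (rule G)
  interpret G2: comm_group "grp M (n + k)" by (rule G)
  have TE: "\<And>j e. (j, e) \<in> supp c \<Longrightarrow> e \<in> E' j" using supp_E[OF c] by fastforce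
  have f1: "tm n c \<in> supp c \<rightarrow> mgr M n" using tm_in[OF c EM] TE by auto
  have s: "supp (\<lambda>j e. b * c j e) \<subseteq> supp c" unfolding supp_def by auto
  have eq: "msm M k n b (tm n c p) = tm (n + k) (\<lambda>j e. b * c j e) p" if p: "p \<in> supp c" for p
  proof -
    obtain j e where pe: "p = (j, e)" by (cases p)
    have e: "e \<in> E' j" using TE p pe by blast
    have "msm M k (j + (n - j)) b (msm M (n - j) j (c j e) e) = msm M (n - j + k) j (b * c j e) e"
      by (rule msm_msm[OF coeff_okD(1)[OF c e] b]) (use e EM in blast)
    moreover have "n - j + k = n + k - j" by simp
    ultimately show ?thesis using pe by (simp add: tm_def)
  qed
  have "msm M k n b (lincomb M n c) = finprod (grp M (n + k)) (\<lambda>p. msm M k n b (tm n c p)) (supp c)"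
    unfolding lincomb_tm by (rule msm_fp[OF b f1])
  also have "\<dots> = finprod (grp M (n + k)) (tm (n + k) (\<lambda>j e. b * c j e)) (supp c)"
    by (rule G2.finprod_cong') (use eq tm_in[OF coeff_ok_mult[OF c b] EM] TE in auto)
  also have "\<dots> = lincomb M (n + k) (\<lambda>j e. b * c j e)"
    by (rule lc_ext[OF coeff_ok_mult[OF c b] EM coeff_okD(3)[OF c] s TE, symmetric])
  finally show ?thesis .
qed

end




locale lres = dgm A F for A :: "('a::ring_1) dg_alg" and F :: "('a, 'm) dg_mod" +
  fixes E :: "int \<Rightarrow> 'm set" and r :: int
  assumes sbF: "semibasis A F E"
begin

abbreviation "TB \<equiv> trunc_basis E r"
abbreviation "L \<equiv> span_set A F (trunc_basis E r)"

lemma E_sub: "E j \<subseteq> mgr F j" using sbF unfolding semibasis_def by blast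
lemma TB_sub: "TB j \<subseteq> mgr F j" using E_sub by (simp add: trunc_basis_def)
lemma TB_E: "e \<in> TB j \<Longrightarrow> e \<in> E j \<and> j \<le> r" by (simp add: trunc_basis_def split: if_splits)

lemma LE: "x \<in> L n \<Longrightarrow> (\<And>c. coeff_ok A TB n c \<Longrightarrow> x = lincomb F n c \<Longrightarrow> P) \<Longrightarrow> P"
  unfolding span_set_def by blast

lemma L_I: "coeff_ok A TB n c \<Longrightarrow> lincomb F n c \<in> L n"
  unfolding span_set_def by blast

lemma L_sub: "x \<in> L n \<Longrightarrow> x \<in> mgr F n"
  by (metis LE lc_in TB_sub)

lemma L_zero: "mzr F n \<in> L n"
  using L_I[OF coeff_ok_zero] lc_zero by simp

lemma L_add: "x \<in> L n \<Longrightarrow> y \<in> L n \<Longrightarrow> mad F n x y \<in> L n"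
proof -
  assume "x \<in> L n" "y \<in> L n"
  then obtain c d where c: "coeff_ok A TB n c" "x = lincomb F n c" and d: "coeff_ok A TB n d" "y = lincomb F n d"
    by (metis LE)
  then show ?thesis using lc_add[OF c(1) d(1) TB_sub] L_I[OF coeff_ok_add[OF c(1) d(1)]] by simp
qed

lemma L_inv: "x \<in> L n \<Longrightarrow> \<exists>y\<in>L n. mad F n x y = mzr F n"
proof -
  assume "x \<in> L n"
  then obtain c where c: "coeff_ok A TB n c" "x = lincomb F n c" by (metis LE)
  have "mad F n x (lincomb F n (\<lambda>j e. - c j e)) = lincomb F n (\<lambda>j e. c j e + - c j e)"
    using lc_add[OF c(1) coeff_ok_neg[OF c(1)] TB_sub] c by simp
  also have "(\<lambda>j e. c j e + - c j e) = (\<lambda>_ _. 0)" by simp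
  finally show ?thesis using lc_zero L_I[OF coeff_ok_neg[OF c(1)]] by auto
qed

lemma L_msm: "a \<in> agr A k \<Longrightarrow> x \<in> L n \<Longrightarrow> msm F k n a x \<in> L (n + k)"
proof -
  assume a: "a \<in> agr A k" and "x \<in> L n"
  then obtain c where c: "coeff_ok A TB n c" "x = lincomb F n c" by (metis LE)
  then show ?thesis using lc_msm[OF c(1) TB_sub a] L_I[OF coeff_ok_mult[OF c(1) a]] by simp
qed

lemma F_L: "m \<le> r \<Longrightarrow> x \<in> mgr F m \<Longrightarrow> x \<in> L m"
proof -
  assume m: "m \<le> r" and x: "x \<in> mgr F m"
  then obtain c where c: "coeff_ok A E m c" "x = lincomb F m c" using sbF unfolding semibasis_def by blast
  have "coeff_ok A TB m c" unfolding coeff_ok_def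
  proof (intro conjI allI)
    fix j e
    show "c j e \<in> (if e \<in> TB j then agr A (m - j) else {0})"
    proof (cases "e \<in> TB j")
      case True then show ?thesis using coeff_okD(1)[OF c(1)] TB_E by auto
    next
      case False
      show ?thesis
      proof (cases "e \<in> E j")
        case True
        then have "j > r" using False by (simp add: trunc_basis_def split: if_splits)
        then have "agr A (m - j) = {0}" using agr_negdeg m by simp
        then show ?thesis using coeff_okD(1)[OF c(1) True] False by simp
      next
        case False2: False
        then show ?thesis using coeff_okD(2)[OF c(1) False2] False by simp
      qed
    qed
  next
    show "finite {(j, e). c j e \<noteq> 0}" using c(1) unfolding coeff_ok_def by blast
  qed
  then show ?thesis using c L_I by simp
qed

lemma L_fp: "f \<in> S \<rightarrow> L n \<Longrightarrow> finprod (grp F n) f S \<in> L n"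
proof (induct S rule: infinite_finite_induct)
  case (infinite S)
  interpret comm_group "grp F n" by (rule G)
  show ?case using infinite L_zero by simp
next
  case empty
  interpret comm_group "grp F n" by (rule G)
  show ?case using L_zero by simp
next
  case (insert x S)
  interpret comm_group "grp F n" by (rule G)
  have fS: "f \<in> S \<rightarrow> L n" and fx: "f x \<in> L n" using insert(4) by auto
  have "f \<in> S \<rightarrow> mgr F n" using fS L_sub by auto
  then have "finprod (grp F n) f (insert x S) = mad F n (f x) (finprod (grp F n) f S)"
    using finprod_insert[of S x f] insert(1,2) L_sub[OF fx] by simp
  then show ?case using L_add[OF fx insert(3)[OF fS]] by simp
qed

lemma L_mdf: "x \<in> L n \<Longrightarrow> mdf F n x \<in> L (n - 1)"
proof -
  assume "x \<in> L n"
  then obtain c where c: "coeff_ok A TB n c" "x = lincomb F n c" by (metis LE)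
  have TE: "\<And>j e. (j, e) \<in> supp c \<Longrightarrow> e \<in> TB j" using supp_E[OF c(1)] by fastforce
  have f1: "tm n c \<in> supp c \<rightarrow> mgr F n" using tm_in[OF c(1) TB_sub] TE by auto
  have piece: "mdf F n (tm n c p) \<in> L (n - 1)" if p: "p \<in> supp c" for p
  proof -
    obtain j e where pe: "p = (j, e)" by (cases p)
    have e: "e \<in> TB j" using TE p pe by blast
    have jr: "j \<le> r" and eE: "e \<in> mgr F j" using TB_E[OF e] E_sub by auto
    have a: "c j e \<in> agr A (n - j)" using coeff_okD(1)[OF c(1) e] .
    have eL: "e \<in> L j" using F_L[OF jr eE] .
    have deL: "mdf F j e \<in> L (j - 1)" using F_L[of "j - 1"] jr mdf_in[OF eE] by simp
    have p1: "msm F (n - j - 1) j (adf A (c j e)) e \<in> L (n - 1)"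
      using L_msm[OF adf_agr[OF a] eL] by simp
    have p2: "msm F (n - j) (j - 1) (sgn_int (n - j) * c j e) (mdf F j e) \<in> L (n - 1)"
      using L_msm[OF sgn_agr[OF a] deL] by simp
    have "mdf F (j + (n - j)) (msm F (n - j) j (c j e) e) =
          mad F (j + (n - j) - 1) (msm F (n - j - 1) j (adf A (c j e)) e) (msm F (n - j) (j - 1) (sgn_int (n - j) * c j e) (mdf F j e))"
      by (rule leib[OF a eE])
    then have "mdf F n (tm n c p) = mad F (n - 1) (msm F (n - j - 1) j (adf A (c j e)) e) (msm F (n - j) (j - 1) (sgn_int (n - j) * c j e) (mdf F j e))"
      using pe by (simp add: tm_def)
    then show ?thesis using L_add[OF p1 p2] by simp
  qed
  have "mdf F n x = finprod (grp F (n - 1)) (\<lambda>p. mdf F n (tm n c p)) (supp c)"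
    unfolding c(2) lincomb_tm by (rule mdf_fp[OF f1])
  then show ?thesis using L_fp[of "\<lambda>p. mdf F n (tm n c p)" "supp c" "n - 1"] piece by auto
qed

lemma Fr_eq: "Fr A F E r = F\<lparr>mgr := L\<rparr>" by (simp add: Fr_def)

lemma Fr_module: "dg_module A (Fr A F E r)"
  unfolding Fr_eq
  by (rule sub_module) (use L_sub L_zero L_add L_inv L_msm L_mdf in auto)

end




context dgm begin
lemma mdf_hom: "mdf M (i + 1) \<in> hom (grp M (i + 1)) (grp M i)"
  unfolding hom_def using mdf_in[of _ "i + 1"] mdf_add[of _ "i + 1"] by auto
end

context lres begin

abbreviation "U \<equiv> trunc_sub F r"

lemma U_lt: "i < r \<Longrightarrow> U i = {mzr F i}" by (simp add: trunc_sub_def)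
lemma U_eq: "U r = mdf F (r + 1) ` mgr F (r + 1)" by (simp add: trunc_sub_def bnds_def)
lemma U_gt: "i > r \<Longrightarrow> U i = mgr F i" by (simp add: trunc_sub_def)

lemma U_subgroup: "subgroup (U i) (grp F i)"
proof -
  interpret comm_group "grp F i" by (rule G)
  consider "i < r" | "i = r" | "i > r" by linarith
  then show ?thesis
  proof cases
    case 1 then show ?thesis using triv_subgroup U_lt by simp
  next
    case 2
    interpret group_hom "grp F (r + 1)" "grp F r" "mdf F (r + 1)"
      unfolding group_hom_def group_hom_axioms_def using G comm_group.axioms(2) mdf_hom by blast
    show ?thesis using img_is_subgroup 2 U_eq by simp
  next
    case 3 then show ?thesis using subgroup_self U_gt by simp
  qed
qed

lemma U_zero: "mzr F i \<in> U i"
  using subgroup.one_closed[OF U_subgroup[of i]] by simp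

lemma U_msm: "a \<in> agr A j \<Longrightarrow> x \<in> U i \<Longrightarrow> msm F j i a x \<in> U (i + j)"
proof -
  assume a: "a \<in> agr A j" and x: "x \<in> U i"
  have xm: "x \<in> mgr F i" using x subgroup.subset[OF U_subgroup[of i]] by auto
  show ?thesis
  proof (cases "j < 0")
    case True
    then have "a = 0" using a agr_negdeg by auto
    then show ?thesis using msm_zero_sc[OF xm] U_zero by simp
  next
    case jn: False
    consider "i < r" | "i = r \<and> j = 0" | "i + j > r" using jn by linarith
    then show ?thesis
    proof cases
      case 1
      then have "x = mzr F i" using x U_lt by simp
      then show ?thesis using msm_zero_v[OF a] U_zero by simp
    next
      case 2
      then have ir: "i = r" and j0: "j = 0" by auto
      obtain y where y: "y \<in> mgr F (r + 1)" "x = mdf F (r + 1) y" using x ir U_eq by auto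
      have a0: "a \<in> agr A 0" using a j0 by simp
      have "adf A a \<in> agr A (0 - 1)" using adf_agr[OF a0] .
      then have da: "adf A a = 0" using agr_negdeg by simp
      have "mdf F (r + 1 + 0) (msm F 0 (r + 1) a y) =
            mad F (r + 1 + 0 - 1) (msm F (0 - 1) (r + 1) (adf A a) y) (msm F 0 (r + 1 - 1) (sgn_int 0 * a) (mdf F (r + 1) y))"
        by (rule leib[OF a0 y(1)])
      also have "\<dots> = mad F r (mzr F r) (msm F 0 r a (mdf F (r + 1) y))"
        using da msm_zero_sc[OF y(1), of "0 - 1"] by (simp add: sgn_int_def)
      also have "\<dots> = msm F 0 r a (mdf F (r + 1) y)"
        using mad_lone msm_in[OF a0 mdf_in[OF y(1)]] by simp
      finally have "msm F 0 r a x = mdf F (r + 1) (msm F 0 (r + 1) a y)" using y by simp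
      moreover have "msm F 0 (r + 1) a y \<in> mgr F (r + 1)" using msm_in[OF a0 y(1)] by simp
      ultimately show ?thesis using ir j0 U_eq by simp
    next
      case 3
      then show ?thesis using U_gt msm_in[OF a xm] by simp
    qed
  qed
qed

lemma U_mdf: "x \<in> U i \<Longrightarrow> mdf F i x \<in> U (i - 1)"
proof -
  assume x: "x \<in> U i"
  have xm: "x \<in> mgr F i" using x subgroup.subset[OF U_subgroup[of i]] by auto
  consider "i < r" | "i = r" | "i = r + 1" | "i > r + 1" by linarith
  then show ?thesis
  proof cases
    case 1
    then show ?thesis using x U_lt mdf_zero U_zero by simp
  next
    case 2
    obtain y where y: "y \<in> mgr F (r + 1)" "x = mdf F (r + 1) y" using x 2 U_eq by auto
    have "mdf F (r + 1 - 1) (mdf F (r + 1) y) = mzr F (r + 1 - 2)" by (rule mdf_mdf[OF y(1)])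
    then show ?thesis using y 2 U_zero by simp
  next
    case 3
    then show ?thesis using xm U_eq by simp
  next
    case 4
    then show ?thesis using U_gt mdf_in[OF xm] by simp
  qed
qed

sublocale Q: qdgm A F U
  by (rule qdgm.intro[OF dgm_axioms qdgm_axioms.intro[OF U_subgroup U_msm U_mdf]])

lemma coset_cq: "coset_of F r = cq F U"
  by (intro ext) (simp add: coset_of_def cq_def)

lemma soft_eq: "soft_trunc F r = qmod F U"
  by (simp add: soft_trunc_def qmod_def coset_cq)

lemma proj_eq: "trunc_proj F r = cq F U"
  by (simp add: trunc_proj_def coset_cq)

end



context lres begin

lemma syz_eq: "syz A F E r = F\<lparr>mgr := (\<lambda>i. L i \<inter> U i)\<rparr>"
proof -
  have "(\<lambda>i. {x \<in> mgr (Fr A F E r) i. trunc_proj F r i x = mzr (soft_trunc F r) i}) = (\<lambda>i. L i \<inter> U i)"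
  proof (intro ext)
    fix i
    have k: "\<And>x. x \<in> L i \<Longrightarrow> (Q.c i x = U i) = (x \<in> U i)" using Q.q_eqU L_sub by blast
    show "{x \<in> mgr (Fr A F E r) i. trunc_proj F r i x = mzr (soft_trunc F r) i} = L i \<inter> U i"
      using k by (auto simp: Fr_eq proj_eq soft_eq qmod_simps)
  qed
  then show ?thesis by (simp add: syz_def)
qed

lemma syz_module: "dg_module A (syz A F E r)"
  unfolding syz_eq
proof (rule sub_module)
  fix i x assume x: "x \<in> L i \<inter> U i"
  interpret comm_group "grp F i" by (rule G)
  obtain y where y: "y \<in> L i" "mad F i x y = mzr F i" using L_inv x by blast
  have xm: "x \<in> mgr F i" and ym: "y \<in> mgr F i" using x y L_sub by auto
  have "inv\<^bsub>grp F i\<^esub> x = y" using inv_equality[of y x] y xm ym mad_comm by simp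
  then have "y \<in> U i" using subgroup.m_inv_closed[OF U_subgroup] x by force
  then show "\<exists>y\<in>L i \<inter> U i. mad F i x y = mzr F i" using y by blast
next
  fix i x y assume "x \<in> L i \<inter> U i" "y \<in> L i \<inter> U i"
  then show "mad F i x y \<in> L i \<inter> U i" using L_add subgroup.m_closed[OF U_subgroup[of i]] by auto
qed (use L_sub L_zero U_zero L_msm U_msm L_mdf U_mdf in auto)

lemma hom_syz: "dg_hom A (syz A F E r) (Fr A F E r) (\<lambda>i x. x)"
  unfolding dg_hom_def syz_eq Fr_eq by simp

lemma hom_pi: "dg_hom A (Fr A F E r) (soft_trunc F r) (trunc_proj F r)"
  unfolding dg_hom_def Fr_eq soft_eq proj_eq
  using Q.q_in Q.q_mad Q.q_mdf Q.q_msm L_sub by simp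

lemma surj_pi: "trunc_proj F r i ` mgr (Fr A F E r) i = mgr (soft_trunc F r) i"
proof -
  have "Q.c i ` L i = Q.c i ` mgr F i"
  proof
    show "Q.c i ` L i \<subseteq> Q.c i ` mgr F i" using L_sub by auto
    show "Q.c i ` mgr F i \<subseteq> Q.c i ` L i"
    proof
      fix X assume "X \<in> Q.c i ` mgr F i"
      then obtain x where x: "x \<in> mgr F i" "X = Q.c i x" by auto
      show "X \<in> Q.c i ` L i"
      proof (cases "i \<le> r")
        case True then show ?thesis using F_L x by auto
      next
        case False
        interpret comm_group "grp F i" by (rule G)
        have "Q.c i x = Q.c i (mzr F i)"
        proof -
          have "x \<otimes>\<^bsub>grp F i\<^esub> inv\<^bsub>grp F i\<^esub> \<one>\<^bsub>grp F i\<^esub> \<in> carrier (grp F i)"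
            using x inv_one r_one[of x] by simp
          then show ?thesis
            using cs_eq_iff[OF U_subgroup, of x "mzr F i"] x False U_gt zero_in by (simp add: cq_cs)
        qed
        then show ?thesis using x L_zero by auto
      qed
    qed
  qed
  then show ?thesis by (simp add: Fr_eq proj_eq soft_eq qmod_simps)
qed

lemma TB_L: "e \<in> TB j \<Longrightarrow> e \<in> L j"
  using TB_E E_sub F_L by blast

lemma tm_L: "coeff_ok A TB n c \<Longrightarrow> p \<in> supp c \<Longrightarrow> tm n c p \<in> L n"
proof -
  assume c: "coeff_ok A TB n c" and p: "p \<in> supp c"
  obtain j e where pe: "p = (j, e)" by (cases p)
  have e: "e \<in> TB j" using supp_E[OF c p] pe by simp
  have "msm F (n - j) j (c j e) e \<in> L (j + (n - j))" using L_msm[OF coeff_okD(1)[OF c e] TB_L[OF e]] .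
  then show ?thesis using pe by (simp add: tm_def)
qed

lemma lincomb_Fr:
  assumes c: "coeff_ok A TB n c"
  shows "lincomb (Fr A F E r) n c = lincomb F n c"
proof -
  interpret FR: dgm A "Fr A F E r" by (rule dgm.intro[OF alg pos Fr_module])
  interpret G1: comm_group "grp (Fr A F E r) n" by (rule FR.G)
  interpret G2: comm_group "grp F n" by (rule G)
  have gen: "f \<in> S \<rightarrow> L n \<Longrightarrow> finprod (grp (Fr A F E r) n) f S = finprod (grp F n) f S" for f and S :: "(int \<times> 'm) set"
  proof (induct S rule: infinite_finite_induct)
    case (infinite S) then show ?case
      using G1.finprod_infinite[OF infinite(1)] G2.finprod_infinite[OF infinite(1)] by (simp add: Fr_eq)
  next
    case empty then show ?case using G1.finprod_empty G2.finprod_empty by (simp add: Fr_eq)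
  next
    case (insert x S)
    have fS: "f \<in> S \<rightarrow> L n" and fx: "f x \<in> L n" using insert(4) by auto
    have fS': "f \<in> S \<rightarrow> mgr F n" using fS L_sub by auto
    have "finprod (grp (Fr A F E r) n) f (insert x S) = mad F n (f x) (finprod (grp (Fr A F E r) n) f S)"
      using G1.finprod_insert[of S x f] insert(1,2) fS fx by (simp add: Fr_eq)
    also have "\<dots> = mad F n (f x) (finprod (grp F n) f S)" using insert(3)[OF fS] by simp
    also have "\<dots> = finprod (grp F n) f (insert x S)"
      using G2.finprod_insert[of S x f] insert(1,2) fS' L_sub[OF fx] by simp
    finally show ?case .
  qed
  have "lincomb (Fr A F E r) n c = finprod (grp (Fr A F E r) n) (tm n c) (supp c)"
    by (simp add: lincomb_def msum_grp tm_def supp_def Fr_eq)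
  also have "\<dots> = finprod (grp F n) (tm n c) (supp c)" using gen tm_L[OF c] by blast
  finally show ?thesis by (simp add: lincomb_tm)
qed

lemma coeff_TB_E: "coeff_ok A TB n c \<Longrightarrow> coeff_ok A E n c"
  unfolding coeff_ok_def using zero_agr by (auto simp: trunc_basis_def split: if_splits)

lemma semifree_Fr:
  assumes bnd: "\<And>i. i < b \<Longrightarrow> mgr F i = {mzr F i}"
  shows "semifree A (Fr A F E r) TB"
  unfolding semifree_def
proof (intro conjI)
  show "dg_module A (Fr A F E r)" by (rule Fr_module)
  show "\<exists>b. \<forall>i<b. mgr (Fr A F E r) i = {mzr (Fr A F E r) i}"
    using bnd L_sub L_zero by (auto simp: Fr_eq) blast
  show "semibasis A (Fr A F E r) TB"
    unfolding semibasis_def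
  proof (intro conjI allI ballI)
    fix j show "TB j \<subseteq> mgr (Fr A F E r) j" using TB_L by (auto simp: Fr_eq)
  next
    fix n x assume "x \<in> mgr (Fr A F E r) n"
    then have x: "x \<in> L n" by (simp add: Fr_eq)
    then obtain c where c: "coeff_ok A TB n c" "x = lincomb F n c" by (metis LE)
    show "\<exists>!c. coeff_ok A TB n c \<and> x = lincomb (Fr A F E r) n c"
    proof (rule ex1I[of _ c])
      show "coeff_ok A TB n c \<and> x = lincomb (Fr A F E r) n c" using c lincomb_Fr by simp
    next
      fix d assume d: "coeff_ok A TB n d \<and> x = lincomb (Fr A F E r) n d"
      have "x \<in> mgr F n" using L_sub x by blast
      then have "\<exists>!c. coeff_ok A E n c \<and> x = lincomb F n c" using sbF unfolding semibasis_def by blast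
      moreover have "coeff_ok A E n d \<and> x = lincomb F n d" using d lincomb_Fr coeff_TB_E by auto
      moreover have "coeff_ok A E n c \<and> x = lincomb F n c" using c coeff_TB_E by auto
      ultimately show "d = c" by blast
    qed
  qed
qed

end



lemma one_neq:
  assumes nz: "dga_nonzero A" and alg: "dg_algebra (A :: ('a::ring_1) dg_alg)"
  shows "(1::'a) \<noteq> 0"
proof
  assume h: "(1::'a) = 0"
  have all0: "\<And>x::'a. x = 0" proof - fix x :: 'a have "x = x * 1" by simp then show "x = 0" using h by simp qed
  have "homology_vanishes (alg_mod A) i" for i
  proof -
    have "0 \<in> agr A (i + 1)" using alg unfolding dg_algebra_def by blast
    then have "bnds (alg_mod A) i \<noteq> {}" by (auto simp: bnds_def alg_mod_def)
    then show ?thesis unfolding homology_vanishes_def using all0 by (metis ex_in_conv subsetI)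
  qed
  then show False using nz unfolding dga_nonzero_def by blast
qed

context lres begin

lemma finite_TB:
  assumes bnd: "\<And>i. i < b \<Longrightarrow> mgr F i = {mzr F i}" and fin: "\<And>j. finite (E j)" and one: "(1::'a) \<noteq> 0"
  shows "finite {(j, e). e \<in> TB j}"
proof -
  have Eempty: "E j = {}" if jb: "j < b" for j
  proof (rule ccontr)
    assume "E j \<noteq> {}"
    then obtain e where e: "e \<in> E j" by blast
    have em: "e \<in> mgr F j" using e E_sub by blast
    then have e0: "e = mzr F j" using bnd[OF jb] by simp
    define c1 where "c1 = (\<lambda>j' e'. if j' = j \<and> e' = e then (1::'a) else 0)"
    have c1ok: "coeff_ok A E j c1"
      unfolding coeff_ok_def
    proof (intro conjI allI)
      fix j' e' show "c1 j' e' \<in> (if e' \<in> E j' then agr A (j - j') else {0})"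
        using one_agr zero_agr e by (auto simp: c1_def)
    next
      have "{(j', e'). c1 j' e' \<noteq> 0} \<subseteq> {(j, e)}" by (auto simp: c1_def split: if_splits)
      then show "finite {(j', e'). c1 j' e' \<noteq> 0}" by (rule finite_subset) simp
    qed
    have s1: "supp c1 \<subseteq> {(j, e)}" by (auto simp: c1_def supp_def split: if_splits)
    have "lincomb F j c1 = finprod (grp F j) (tm j c1) {(j, e)}"
      by (rule lc_ext[OF c1ok E_sub _ s1]) (use e in auto)
    also have "\<dots> = tm j c1 (j, e)"
    proof -
      interpret comm_group "grp F j" by (rule G)
      show ?thesis using tm_in[OF c1ok E_sub e] r_one[of "tm j c1 (j, e)"] by simp
    qed
    also have "\<dots> = e" using msm_one[OF em] by (simp add: tm_def c1_def)
    finally have l1: "lincomb F j c1 = mzr F j" using e0 by simp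
    have "\<exists>!c. coeff_ok A E j c \<and> mzr F j = lincomb F j c"
      using sbF zero_in unfolding semibasis_def by blast
    then have "c1 = (\<lambda>_ _. 0)" using c1ok l1 coeff_ok_zero lc_zero by metis
    then have "c1 j e = 0" by simp
    then show False using one by (simp add: c1_def)
  qed
  have "{(j, e). e \<in> TB j} \<subseteq> Sigma {b..r} E"
  proof
    fix p assume "p \<in> {(j, e). e \<in> TB j}"
    then obtain j e where p: "p = (j, e)" "e \<in> TB j" by blast
    then have "e \<in> E j" "j \<le> r" using TB_E by auto
    moreover then have "j \<ge> b" using Eempty by (metis empty_iff not_le)
    ultimately show "p \<in> Sigma {b..r} E" using p by auto
  qed
  moreover have "finite (Sigma {b..r} E)" using fin by (intro finite_SigmaI) auto
  ultimately show ?thesis by (rule finite_subset)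
qed

end



lemma vanish_from_eps:
  assumes alg: "dg_algebra A" and pos: "positively_graded A" and K: "dg_module A K"
    and qi: "quasi_iso A F K eps" and hv: "homology_vanishes K i"
    and z: "z \<in> cycles F i" and FM: "dg_module A F"
  shows "z \<in> bnds F i"
proof -
  interpret KK: dgm A K by (rule dgm.intro[OF alg pos K])
  interpret FF: dgm A F by (rule dgm.intro[OF alg pos FM])
  have hom: "dg_hom A F K eps" using qi unfolding quasi_iso_def by blast
  have zm: "z \<in> mgr F i" and dz: "mdf F i z = mzr F (i - 1)" using z unfolding cycles_def by auto
  have e1: "eps i z \<in> mgr K i" using hom zm unfolding dg_hom_def by blast
  have e2: "eps (i - 1) (mdf F i z) = mdf K i (eps i z)" using hom zm unfolding dg_hom_def by blast
  have z0: "eps (i - 1) (mzr F (i - 1)) = mzr K (i - 1)"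
  proof (rule KK.idem_one)
    show "eps (i - 1) (mzr F (i - 1)) \<in> mgr K (i - 1)" using hom FF.zero_in unfolding dg_hom_def by blast
    have "eps (i - 1) (mad F (i - 1) (mzr F (i - 1)) (mzr F (i - 1))) =
          mad K (i - 1) (eps (i - 1) (mzr F (i - 1))) (eps (i - 1) (mzr F (i - 1)))"
      using hom FF.zero_in unfolding dg_hom_def by blast
    then show "mad K (i - 1) (eps (i - 1) (mzr F (i - 1))) (eps (i - 1) (mzr F (i - 1))) = eps (i - 1) (mzr F (i - 1))"
      using FF.mad_lone[OF FF.zero_in] by simp
  qed
  have "eps i z \<in> cycles K i" using e1 e2 dz z0 unfolding cycles_def by simp
  then have "eps i z \<in> bnds K i" using hv unfolding homology_vanishes_def by blast
  then show ?thesis using qi z unfolding quasi_iso_def by blast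
qed

context lres begin

lemma inv_eq_one: "x \<in> mgr F i \<Longrightarrow> w \<in> mgr F i \<Longrightarrow> mad F i x (inv\<^bsub>grp F i\<^esub> w) = mzr F i \<Longrightarrow> x = w"
proof -
  interpret comm_group "grp F i" by (rule G)
  assume x: "x \<in> mgr F i" and w: "w \<in> mgr F i" and h: "mad F i x (inv\<^bsub>grp F i\<^esub> w) = mzr F i"
  have iw: "inv\<^bsub>grp F i\<^esub> w \<in> mgr F i" using w inv_closed[of w] by simp
  have "inv\<^bsub>grp F i\<^esub> (inv\<^bsub>grp F i\<^esub> w) = x" using inv_equality[of x "inv\<^bsub>grp F i\<^esub> w"] x iw h by simp
  then show ?thesis using w by simp
qed

lemma qi_pi:
  assumes van: "\<And>i z. i > r \<Longrightarrow> z \<in> cycles F i \<Longrightarrow> z \<in> bnds F i"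
  shows "quasi_iso A F Q.Q Q.c"
  unfolding quasi_iso_def
proof (intro conjI allI ballI impI)
  show "dg_hom A F Q.Q Q.c" by (rule Q.q_hom)
next
  fix i z assume z: "z \<in> cycles F i" and cb: "Q.c i z \<in> bnds Q.Q i"
  have zm: "z \<in> mgr F i" using z unfolding cycles_def by auto
  obtain Y where Y: "Y \<in> mgr Q.Q (i + 1)" "Q.c i z = mdf Q.Q (i + 1) Y" using cb unfolding bnds_def by auto
  then obtain y where y: "y \<in> mgr F (i + 1)" "Y = Q.c (i + 1) y" by (metis Q.qE)
  have "mdf Q.Q (i + 1) Y = Q.c (i + 1 - 1) (mdf F (i + 1) y)" using Q.q_mdf[OF y(1)] y by simp
  then have ceq: "Q.c i z = Q.c i (mdf F (i + 1) y)" using Y by simp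
  have dym: "mdf F (i + 1) y \<in> mgr F i" using mdf_in[OF y(1)] by simp
  have dyb: "mdf F (i + 1) y \<in> bnds F i" using y(1) unfolding bnds_def by auto
  interpret comm_group "grp F i" by (rule G)
  have inU: "mad F i z (inv\<^bsub>grp F i\<^esub> (mdf F (i + 1) y)) \<in> U i"
    using cs_eq_iff[OF U_subgroup[of i], of z "mdf F (i + 1) y"] zm dym ceq by (simp add: cq_cs)
  consider "i < r" | "i = r" | "i > r" by linarith
  then show "z \<in> bnds F i"
  proof cases
    case 1
    then have "z = mdf F (i + 1) y" using inU U_lt inv_eq_one[OF zm dym] by simp
    then show ?thesis using dyb by simp
  next
    case 2
    have dU: "mdf F (i + 1) y \<in> U i" using dyb 2 by (simp add: trunc_sub_def)
    have "z = mad F i (mad F i z (inv\<^bsub>grp F i\<^esub> (mdf F (i + 1) y))) (mdf F (i + 1) y)"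
      using zm dym m_assoc[of z "inv\<^bsub>grp F i\<^esub> (mdf F (i + 1) y)" "mdf F (i + 1) y", simplified]
        l_inv[of "mdf F (i + 1) y", simplified] r_one[of z, simplified] inv_closed[of "mdf F (i + 1) y", simplified]
      by simp
    moreover have "\<dots> \<in> U i" using subgroup.m_closed[OF U_subgroup] inU dU by simp
    ultimately have "z \<in> U i" by simp
    then show ?thesis using 2 by (simp add: trunc_sub_def)
  next
    case 3 then show ?thesis using van z by blast
  qed
next
  fix i w assume w: "w \<in> cycles Q.Q i"
  have wm: "w \<in> mgr Q.Q i" and dw: "mdf Q.Q i w = mzr Q.Q (i - 1)" using w unfolding cycles_def by auto
  obtain x where x: "x \<in> mgr F i" "w = Q.c i x" using wm by (metis Q.qE)
  have "Q.c (i - 1) (mdf F i x) = U (i - 1)" using dw x Q.q_mdf by (simp add: qmod_simps)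
  then have dxU: "mdf F i x \<in> U (i - 1)" using Q.q_eqU mdf_in[OF x(1)] by simp
  have b0: "Q.c (i + 1) (mzr F (i + 1)) \<in> mgr Q.Q (i + 1)" using Q.q_in zero_in by blast
  have db0: "mdf Q.Q (i + 1) (Q.c (i + 1) (mzr F (i + 1))) = Q.c i (mzr F i)"
    using Q.q_mdf[OF zero_in[of "i + 1"]] mdf_zero[of "i + 1"] by simp
  show "\<exists>z\<in>cycles F i. \<exists>b\<in>mgr Q.Q (i + 1). w = mad Q.Q i (Q.c i z) (mdf Q.Q (i + 1) b)"
  proof (cases "i \<le> r")
    case True
    then have "mdf F i x = mzr F (i - 1)" using dxU U_lt[of "i - 1"] by simp
    then have xc: "x \<in> cycles F i" using x unfolding cycles_def by simp
    have "mad Q.Q i (Q.c i x) (mdf Q.Q i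
     (Q.c i (mzr F i))) = mad Q.Q i (Q.c i x) (mdf Q.Q i (Q.c i (mzr F i)))" by simp
    have "w = mad Q.Q i (Q.c i x) (Q.c i (mzr F i))"
      using Q.q_mad[OF x(1) zero_in] x mad_comm[OF x(1) zero_in] mad_lone[OF x(1)] by simp
    then show ?thesis using xc b0 db0 by metis
  next
    case False
    have zc: "mzr F i \<in> cycles F i" using zero_in mdf_zero unfolding cycles_def by simp
    interpret comm_group "grp F i" by (rule G)
    have "x \<otimes>\<^bsub>grp F i\<^esub> inv\<^bsub>grp F i\<^esub> \<one>\<^bsub>grp F i\<^esub> \<in> carrier (grp F i)"
      using x(1) inv_one r_one[of x] by simp
    then have "Q.c i x = Q.c i (mzr F i)"
      using cs_eq_iff[OF U_subgroup, of x "mzr F i"] x False U_gt zero_in by (simp add: cq_cs)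
    also have "\<dots> = mad Q.Q i (Q.c i (mzr F i)) (Q.c i (mzr F i))"
      using Q.q_mad[OF zero_in zero_in] mad_lone[OF zero_in] by simp
    finally show ?thesis using zc b0 db0 x by metis
  qed
qed

lemma ap_zero: "mzr F n \<in> aplus_span A (F\<lparr>mgr := L\<rparr>) L n"
  using aplus_span.zero[where M="F\<lparr>mgr := L\<rparr>" and A=A and S=L and n=n] by simp

lemma aplus_lift:
  "x \<in> aplus_span A F (mgr F) n \<Longrightarrow> n \<le> r \<Longrightarrow> x \<in> aplus_span A (F\<lparr>mgr := L\<rparr>) L n"
proof (induct rule: aplus_span.induct)
  case zero
  then show ?case using ap_zero by simp
next
  case (step x j a s)
  have sL: "s \<in> L (n - j)" using F_L[of "n - j" s] step by simp
  show ?case using aplus_span.step[OF step(2)[OF step(6)] step(3) step(4) sL] by simp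
qed

lemma aplus_syz:
  assumes minim: "\<And>n x. x \<in> mgr F n \<Longrightarrow> mdf F n x \<in> aplus_span A F (mgr F) (n - 1)"
    and x: "x \<in> L i" "x \<in> U i"
  shows "x \<in> aplus_span A (F\<lparr>mgr := L\<rparr>) L i"
proof -
  consider "i < r" | "i = r" | "i > r" by linarith
  then show ?thesis
  proof cases
    case 1
    then have "x = mzr F i" using x U_lt by simp
    then show ?thesis using ap_zero[of i] by simp
  next
    case 2
    then obtain y where y: "y \<in> mgr F (r + 1)" "x = mdf F (r + 1) y" using x U_eq by auto
    have "x \<in> aplus_span A F (mgr F) i" using minim[OF y(1)] y 2 by simp
    then show ?thesis using aplus_lift 2 by simp
  next
    case 3
    obtain c where c: "coeff_ok A TB i c" "x = lincomb F i c" using x(1) by (metis LE)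
    interpret comm_group "grp F i" by (rule G)
    have TE: "\<And>j e. (j, e) \<in> supp c \<Longrightarrow> e \<in> TB j" using supp_E[OF c(1)] by fastforce
    have gen: "S \<subseteq> supp c \<Longrightarrow> finprod (grp F i) (tm i c) S \<in> aplus_span A (F\<lparr>mgr := L\<rparr>) L i" for S
    proof (induct S rule: infinite_finite_induct)
      case (infinite S) then show ?case using ap_zero[of i] by simp
    next
      case empty then show ?case using ap_zero[of i] by simp
    next
      case (insert p S)
      obtain j e where pe: "p = (j, e)" by (cases p)
      have e: "e \<in> TB j" using TE insert(4) pe by blast
      have jr: "j \<le> r" using TB_E[OF e] by simp
      have a: "c j e \<in> agr A (i - j)" using coeff_okD(1)[OF c(1) e] .
      have eL: "e \<in> L (i - (i - j))" using TB_L[OF e] by simp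
      have fS: "tm i c \<in> S \<rightarrow> mgr F i" using tm_in[OF c(1) TB_sub] TE insert(4) by auto
      have fp: "tm i c p \<in> mgr F i" using tm_in[OF c(1) TB_sub e] pe by simp
      have "finprod (grp F i) (tm i c) (insert p S) = mad F i (tm i c p) (finprod (grp F i) (tm i c) S)"
        using finprod_insert[of S p "tm i c"] insert(1,2) fS fp by simp
      also have "\<dots> = mad F i (finprod (grp F i) (tm i c) S) (tm i c p)"
        using mad_comm fp finprod_closed[of "tm i c" S] fS by simp
      also have "\<dots> = mad (F\<lparr>mgr := L\<rparr>) i (finprod (grp F i) (tm i c) S) (msm (F\<lparr>mgr := L\<rparr>) (i - j) (i - (i - j)) (c j e) e)"
        using pe by (simp add: tm_def)
      finally show ?case
        using aplus_span.step[OF insert(3) _ a eL] insert(4) 3 jr by simp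
    qed
    have "x = finprod (grp F i) (tm i c) (supp c)" using c by (simp add: lincomb_tm)
    then show ?thesis using gen by simp
  qed
qed

end


theorem proposition4p2:
  fixes A :: "('a::ring_1) dg_alg"
    and K :: "('a, 'k) dg_mod"
    and F :: "('a, 'f) dg_mod"
    and E :: "int \<Rightarrow> 'f set"
    and eps :: "int \<Rightarrow> 'f \<Rightarrow> 'k"
    and r :: int
  assumes "local_dg_algebra A"
    and "max_ideal_is_Aplus A"
    and "homologically_bounded A"
    and "dga_nonzero A"
    and "dg_module A K"
    and "homologically_finite A K"
    and "minimal_semifree_resolution A F E K eps"
    and "\<forall>i>r. homology_vanishes K i"
  shows "dg_module A (syz A F E r) \<and> dg_module A (Fr A F E r) \<and> dg_module A (soft_trunc F r) \<and>
         dg_hom A (syz A F E r) (Fr A F E r) (\<lambda>i x. x) \<and>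
         dg_hom A (Fr A F E r) (soft_trunc F r) (trunc_proj F r) \<and>
         (\<forall>i. inj_on (\<lambda>x. x) (mgr (syz A F E r) i)) \<and>
         (\<forall>i. {x \<in> mgr (Fr A F E r) i. trunc_proj F r i x = mzr (soft_trunc F r) i}
                = (\<lambda>x. x) ` mgr (syz A F E r) i) \<and>
         (\<forall>i. trunc_proj F r i ` mgr (Fr A F E r) i = mgr (soft_trunc F r) i) \<and>
         semifree A (Fr A F E r) (trunc_basis E r) \<and>
         finite {(j, e). e \<in> trunc_basis E r j} \<and>
         quasi_isomorphic_via TYPE('f) A (soft_trunc F r) K \<and>
         (\<forall>i. (\<lambda>x. x) ` mgr (syz A F E r) i \<subseteq> aplus_span A (Fr A F E r) (mgr (Fr A F E r)) i)"
proof -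
  have ldg: "dg_algebra A" "positively_graded A" using assms(1) unfolding local_dg_algebra_def by auto
  have msr: "semifree A F E" "\<forall>j. finite (E j)" "quasi_iso A F K eps"
      "\<forall>n. \<forall>x\<in>mgr F n. mdf F n x \<in> aplus_span A F (mgr F) (n - 1)"
    using assms(7) unfolding minimal_semifree_resolution_def by auto
  have FM: "dg_module A F" and sb: "semibasis A F E" using msr(1) unfolding semifree_def by auto
  obtain b where bnd: "\<forall>i<b. mgr F i = {mzr F i}" using msr(1) unfolding semifree_def by auto
  interpret R: lres A F E r
    by (rule lres.intro[OF dgm.intro[OF ldg FM] lres_axioms.intro[OF sb]])
  have one: "(1::'a) \<noteq> 0" by (rule one_neq[OF assms(4) ldg(1)])
  have van: "\<And>i z. i > r \<Longrightarrow> z \<in> cycles F i \<Longrightarrow> z \<in> bnds F i"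
    using vanish_from_eps[OF ldg assms(5) msr(3) _ _ FM] assms(8) by blast
  have qiv: "quasi_isomorphic_via TYPE('f) A (soft_trunc F r) K"
    unfolding quasi_isomorphic_via_def
    using FM R.qi_pi[OF van] msr(3) R.soft_eq by metis
  have ap: "\<forall>i. (\<lambda>x. x) ` mgr (syz A F E r) i \<subseteq> aplus_span A (Fr A F E r) (mgr (Fr A F E r)) i"
    using R.aplus_syz msr(4) by (auto simp: R.syz_eq R.Fr_eq)
  have ker: "\<forall>i. {x \<in> mgr (Fr A F E r) i. trunc_proj F r i x = mzr (soft_trunc F r) i}
                = (\<lambda>x. x) ` mgr (syz A F E r) i" by (simp add: syz_def)
  show ?thesis
    using R.syz_module R.Fr_module R.Q.q_module R.soft_eq R.hom_syz R.hom_pi ker R.surj_pi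
      R.semifree_Fr[of b] bnd R.finite_TB[of b] msr(2) one qiv ap
    by auto
qed

end
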